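(* Let $n=2k$ with $k\ge1$, let $G_1,\dots,G_n$ be rooted graphs and let $G$ be the decorated path obtained from them, with path vertices $1,\dots,n$. Assume $\alpha_i^{G_i}=\alpha_{n+1-i}^{G_{n+1-i}}$ for all $i$, and that vertices $1$ and $n$ are strongly cospectral in $G$. Fix a sign $s\in\{+,-\}$. Then for a real number $\theta$ the following are equivalent: (i) $\theta\in\Phi_{1n}^s(G)$; (ii) $G[\theta]$ is well defined and $\theta\in\Phi_{1n}^s(G[\theta])$; (iii) $G[\theta]$ is well defined and $\theta$ is an eigenvalue of $A(G^s[\theta])$ in the eigenvalue support of vertex $1$; (iv) $\theta$ is an eigenvalue of $A(G^s)$ in the eigenvalue support of vertex $1$ (equivalently, $\alpha_1^{G^s}(\theta)=0$).
   Context: For a (possibly weighted, possibly with loops) graph $H$ with symmetric real adjacency matrix $A(H)$ (a loop of weight $w$ at $i$ contributes $w$ to the diagonal entry $(i,i)$), $\phi^H=\det(xI-A(H))$ and $\alpha_i^H=\phi^H/\phi^{H\setminus i}$. For an eigenvalue $\theta$, $E_\theta$ is the orthogonal projection onto the eigenspace; the eigenvalue support of $i$ is the set of eigenvalues $\theta$ with $E_\theta e_i\neq0$. Vertices $i,j$ are strongly cospectral if $E_\theta e_i=\pm E_\theta e_j$ for all eigenvalues $\theta$. If $1,n$ are strongly cospectral, $\Phi_{1n}^+(H)$ (resp. $\Phi_{1n}^-(H)$) is the set of eigenvalues $\theta$ in the support of $1$ with $E_\theta e_1=E_\theta e_n$ (resp. $E_\theta e_1=-E_\theta e_n$). The decorated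 path built from pairwise disjoint rooted graphs $G_1,\dots,G_n$ is obtained from the path on vertices $1,\dots,n$ ($i\sim i+1$) by identifying the root of $G_i$ with vertex $i$; $\alpha_i^{G_i}$ is taken at this root. $G^\pm$ denotes the decorated path on vertices $1,\dots,k$ built from $G_1,\dots,G_k$, with an additional loop of weight $\pm1$ at vertex $k$. For real $\theta$ at which no $\alpha_i^{G_i}$ has a pole, $G[\theta]$ is well defined and is the weighted path on $1,\dots,n$ with unit edge weights and a loop of weight $\theta-\alpha_i^{G_i}(\theta)$ at each $i$; $G^\pm[\theta]$ is the weighted path on $1,\dots,k$ with unit edge weights, loop weight $\theta-\alpha_i^{G_i}(\theta)$ at $i<k$, and loop weight $\theta-\alpha_k^{G_k}(\theta)\pm1$ at $k$. *)

theory Defs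
  imports "Jordan_Normal_Form.Char_Poly" "HOL-Computational_Algebra.Normalized_Fraction" "HOL-Computational_Algebra.Field_as_Ring" "HOL-Computational_Algebra.Polynomial_Factorial"
begin

text \<open>Graphs are represented by their (symmetric, real) adjacency matrices; vertices
  of a matrix of dimension N are 0,...,N-1. A rooted graph is a pair (M i, r i) of a
  square symmetric real matrix and a root index r i < dim_row (M i).\<close>

definition eigenspace :: "real mat \<Rightarrow> real \<Rightarrow> real vec set" where
  "eigenspace A \<theta> = {v \<in> carrier_vec (dim_row A). A *\<^sub>v v = \<theta> \<cdot>\<^sub>v v}"

definition eig_proj :: "real mat \<Rightarrow> real \<Rightarrow> real vec \<Rightarrow> real vec" where
  "eig_proj A \<theta> x = (THE p. p \<in> eigenspace A \<theta> \<and> (\<forall>w\<in>eigenspace A \<theta>. (x - p) \<bullet> w = 0))"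

definition eig_support :: "real mat \<Rightarrow> nat \<Rightarrow> real set" where
  "eig_support A i = {\<theta>. eigenvalue A \<theta> \<and>
      eig_proj A \<theta> (unit_vec (dim_row A) i) \<noteq> 0\<^sub>v (dim_row A)}"

definition strongly_cospectral :: "real mat \<Rightarrow> nat \<Rightarrow> nat \<Rightarrow> bool" where
  "strongly_cospectral A i j \<longleftrightarrow> (\<forall>\<theta>. eigenvalue A \<theta> \<longrightarrow>
      (eig_proj A \<theta> (unit_vec (dim_row A) i) = eig_proj A \<theta> (unit_vec (dim_row A) j) \<or>
       eig_proj A \<theta> (unit_vec (dim_row A) i) = - eig_proj A \<theta> (unit_vec (dim_row A) j)))"

text \<open>Phi^s_{ij}(A) with sign s = 1 (for +) or s = -1 (for -).\<close>
definition Phi :: "real mat \<Rightarrow> real \<Rightarrow> nat \<Rightarrow> nat \<Rightarrow> real set" where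
  "Phi A s i j = {\<theta> \<in> eig_support A i.
      eig_proj A \<theta> (unit_vec (dim_row A) i) = s \<cdot>\<^sub>v eig_proj A \<theta> (unit_vec (dim_row A) j)}"

definition alpha :: "real mat \<Rightarrow> nat \<Rightarrow> real poly fract" where
  "alpha A i = Fraction_Field.Fract (char_poly A) (char_poly (mat_delete A i i))"

definition rf_pole :: "real poly fract \<Rightarrow> real \<Rightarrow> bool" where
  "rf_pole f x \<longleftrightarrow> poly (snd (quot_of_fract f)) x = 0"

definition rf_val :: "real poly fract \<Rightarrow> real \<Rightarrow> real" where
  "rf_val f x = poly (fst (quot_of_fract f)) x / poly (snd (quot_of_fract f)) x"

definition offs :: "(nat \<Rightarrow> real mat) \<Rightarrow> nat \<Rightarrow> nat" where
  "offs M i = (\<Sum>j<i. dim_row (M j))"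

text \<open>Index of path vertex i+1 (0-based i) in the decorated path = root of G_{i+1}.\<close>
definition pathv :: "(nat \<Rightarrow> real mat) \<Rightarrow> (nat \<Rightarrow> nat) \<Rightarrow> nat \<Rightarrow> nat" where
  "pathv M r i = offs M i + r i"

definition decorated_path :: "nat \<Rightarrow> (nat \<Rightarrow> real mat) \<Rightarrow> (nat \<Rightarrow> nat) \<Rightarrow> real mat" where
  "decorated_path n M r = mat (offs M n) (offs M n) (\<lambda>(a,b).
     (\<Sum>i<n. if offs M i \<le> a \<and> a < offs M (Suc i) \<and> offs M i \<le> b \<and> b < offs M (Suc i)
             then M i $$ (a - offs M i, b - offs M i) else 0)
     + (if \<exists>i. Suc i < n \<and> ((a = pathv M r i \<and> b = pathv M r (Suc i)) \<or>
                              (b = pathv M r i \<and> a = pathv M r (Suc i))) then 1 else 0))"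

definition decorated_path_loop :: "nat \<Rightarrow> (nat \<Rightarrow> real mat) \<Rightarrow> (nat \<Rightarrow> nat) \<Rightarrow> real \<Rightarrow> real mat" where
  "decorated_path_loop k M r s = mat (offs M k) (offs M k) (\<lambda>(a,b).
     decorated_path k M r $$ (a,b) + (if a = pathv M r (k - 1) \<and> b = a then s else 0))"

definition wpath :: "nat \<Rightarrow> (nat \<Rightarrow> real) \<Rightarrow> real mat" where
  "wpath n d = mat n n (\<lambda>(a,b). if a = b then d a else if a = Suc b \<or> b = Suc a then 1 else 0)"

definition path_well_defined :: "nat \<Rightarrow> (nat \<Rightarrow> real mat) \<Rightarrow> (nat \<Rightarrow> nat) \<Rightarrow> real \<Rightarrow> bool" where
  "path_well_defined n M r \<theta> \<longleftrightarrow> (\<forall>i<n. \<not> rf_pole (alpha (M i) (r i)) \<theta>)"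

definition path_at :: "nat \<Rightarrow> (nat \<Rightarrow> real mat) \<Rightarrow> (nat \<Rightarrow> nat) \<Rightarrow> real \<Rightarrow> real mat" where
  "path_at n M r \<theta> = wpath n (\<lambda>i. \<theta> - rf_val (alpha (M i) (r i)) \<theta>)"

definition path_loop_at :: "nat \<Rightarrow> (nat \<Rightarrow> real mat) \<Rightarrow> (nat \<Rightarrow> nat) \<Rightarrow> real \<Rightarrow> real \<Rightarrow> real mat" where
  "path_loop_at k M r s \<theta> =
     wpath k (\<lambda>i. \<theta> - rf_val (alpha (M i) (r i)) \<theta> + (if i = k - 1 then s else 0))"

end

theory Submission
  imports Defs "Jordan_Normal_Form.Matrix_Kernel"
begin


lemma fin_span:
  fixes A :: "real mat"
  assumes A: "A \<in> carrier_mat N N"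
  shows "\<exists>B. finite B \<and> B \<subseteq> mat_kernel A \<and> (\<forall>w \<in> mat_kernel A. \<exists>c. \<forall>i<N. w $ i = (\<Sum>b\<in>B. c b * b $ i))"
proof -
  from kernel_basis_exists[OF A] obtain B where B: "finite B" "kernel.basis N A B" by auto
  interpret kernel N N A by (unfold_locales, rule A)
  from B(2) have BK: "B \<subseteq> mat_kernel A" and gen: "span B = mat_kernel A"
    unfolding Ker.basis_def by auto
  show ?thesis
  proof (intro exI[of _ B] conjI ballI)
    fix w assume "w \<in> mat_kernel A"
    hence "w \<in> span B" using gen by simp
    then obtain a U where U: "finite U" "U \<subseteq> B" "w = lincomb a U"
      unfolding Ker.span_def by auto
    have UK: "U \<subseteq> mat_kernel A" using U BK by auto
    show "\<exists>c. \<forall>i<N. w $ i = (\<Sum>b\<in>B. c b * b $ i)"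
    proof (intro exI allI impI)
      fix i assume i: "i < N"
      have "w $ i = (\<Sum>x\<in>U. a x * x $ i)" using U lincomb_index[OF i UK] by simp
      also have "\<dots> = (\<Sum>x\<in>B. (if x \<in> U then a x else 0) * x $ i)"
        using U B(1) by (intro sum.mono_neutral_cong_left) auto
      finally show "w $ i = (\<Sum>x\<in>B. (if x \<in> U then a x else 0) * x $ i)" .
    qed
  qed (use B BK in auto)
qed

definition D :: "nat \<Rightarrow> (nat \<Rightarrow> real) \<Rightarrow> (nat \<Rightarrow> real) \<Rightarrow> real" where
  "D N f g = (\<Sum>i<N. f i * g i)"

lemma D_orth_comb:
  assumes "\<forall>k\<in>I. D N y (F k) = 0"
  shows "D N y (\<lambda>i. \<Sum>k\<in>I. c k * F k i) = 0"
proof -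
  have "D N y (\<lambda>i. \<Sum>k\<in>I. c k * F k i) = (\<Sum>k\<in>I. c k * D N y (F k))"
    unfolding D_def by (simp add: sum_distrib_left sum_distrib_right algebra_simps; subst sum.swap; simp add: sum_distrib_left algebra_simps)
  thus ?thesis using assms by simp
qed

lemma proj_fun:
  assumes "finite I"
  shows "\<exists>c. \<forall>k\<in>I. D N (\<lambda>i. x i - (\<Sum>k'\<in>I. c k' * F k' i)) (F k) = 0"
  using assms
proof (induction I arbitrary: x rule: finite_induct)
  case empty thus ?case by simp
next
  case (insert v I)
  obtain c1 where c1: "\<forall>k\<in>I. D N (\<lambda>i. x i - (\<Sum>k'\<in>I. c1 k' * F k' i)) (F k) = 0"
    using insert.IH by blast
  obtain c2 where c2: "\<forall>k\<in>I. D N (\<lambda>i. F v i - (\<Sum>k'\<in>I. c2 k' * F k' i)) (F k) = 0"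
    using insert.IH by blast
  define p' where "p' = (\<lambda>i. \<Sum>k'\<in>I. c1 k' * F k' i)"
  define pv where "pv = (\<lambda>i. \<Sum>k'\<in>I. c2 k' * F k' i)"
  define v' where "v' = (\<lambda>i. F v i - pv i)"
  have xp'_pv: "D N (\<lambda>i. x i - p' i) pv = 0" unfolding pv_def
    by (rule D_orth_comb) (use c1 p'_def in auto)
  have v'_pv: "D N v' pv = 0" unfolding pv_def
    by (rule D_orth_comb) (use c2 v'_def pv_def in auto)
  show ?case
  proof (cases "D N v' v' = 0")
    case True
    hence "\<forall>i\<in>{..<N}. v' i * v' i = 0" unfolding D_def
      by (subst (asm) sum_nonneg_eq_0_iff) auto
    hence vv: "\<forall>i<N. F v i = pv i" unfolding v'_def by auto
    define c where "c = (\<lambda>k. if k = v then 0 else c1 k)"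
    have pc: "(\<Sum>k'\<in>insert v I. c k' * F k' i) = p' i" for i
      unfolding c_def p'_def using insert.hyps by (auto intro!: sum.cong)
    have "D N (\<lambda>i. x i - p' i) (F v) = D N (\<lambda>i. x i - p' i) pv"
      unfolding D_def using vv by (auto intro!: sum.cong)
    hence "D N (\<lambda>i. x i - p' i) (F v) = 0" using xp'_pv by simp
    thus ?thesis using c1 unfolding pc p'_def by (intro exI[of _ c]) (auto simp: pc[unfolded p'_def])
  next
    case False
    define \<tau> where "\<tau> = D N (\<lambda>i. x i - p' i) v' / D N v' v'"
    define c where "c = (\<lambda>k. if k = v then \<tau> else c1 k - \<tau> * c2 k)"
    have pc: "(\<Sum>k'\<in>insert v I. c k' * F k' i) = p' i + \<tau> * v' i" for i
    proof -
      have "(\<Sum>k'\<in>insert v I. c k' * F k' i) = \<tau> * F v i + (\<Sum>k'\<in>I. (c1 k' - \<tau> * c2 k') * F k' i)"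
        using insert.hyps unfolding c_def by (auto intro!: sum.cong)
      also have "\<dots> = p' i + \<tau> * v' i"
        unfolding p'_def v'_def pv_def by (simp add: algebra_simps sum_subtractf sum_distrib_left)
      finally show ?thesis .
    qed
    have lin: "D N (\<lambda>i. f i - \<tau> * g i) h = D N f h - \<tau> * D N g h" for f g h
      unfolding D_def by (simp add: algebra_simps sum_subtractf sum_distrib_left)
    have "\<forall>k\<in>insert v I. D N (\<lambda>i. x i - (p' i + \<tau> * v' i)) (F k) = 0"
    proof
      fix k assume k: "k \<in> insert v I"
      have e: "D N (\<lambda>i. x i - (p' i + \<tau> * v' i)) (F k) = D N (\<lambda>i. x i - p' i) (F k) - \<tau> * D N v' (F k)"
        using lin[of "\<lambda>i. x i - p' i" v' "F k"] by (simp add: algebra_simps)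
      show "D N (\<lambda>i. x i - (p' i + \<tau> * v' i)) (F k) = 0"
      proof (cases "k = v")
        case False
        hence kI: "k \<in> I" using k by auto
        have "D N v' (F k) = 0" using c2 kI unfolding v'_def pv_def by auto
        thus ?thesis using e c1 kI unfolding p'_def by auto
      next
        case True
        have Fv: "F v i = v' i + pv i" for i unfolding v'_def by simp
        have split: "D N f (F v) = D N f v' + D N f pv" for f
          unfolding D_def Fv by (simp add: algebra_simps sum.distrib)
        have "D N v' pv = 0" by (rule v'_pv)
        hence "D N v' (F v) = D N v' v'" using split[of v'] by simp
        moreover have "D N (\<lambda>i. x i - p' i) (F v) = D N (\<lambda>i. x i - p' i) v'"
          using split[of "\<lambda>i. x i - p' i"] xp'_pv by simp
        ultimately show ?thesis using e True False unfolding \<tau>_def by simp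
      qed
    qed
    thus ?thesis unfolding pc by (intro exI[of _ c]) (simp add: pc)
  qed
qed

lemma sp_sum: "u \<in> carrier_vec N \<Longrightarrow> v \<in> carrier_vec N \<Longrightarrow> u \<bullet> v = (\<Sum>i<N. u $ i * v $ i)"
  unfolding scalar_prod_def by (simp add: atLeast0LessThan)

lemma smult_one_mat_vec: "v \<in> carrier_vec N \<Longrightarrow> (\<theta> \<cdot>\<^sub>m 1\<^sub>m N) *\<^sub>v v = (\<theta>::real) \<cdot>\<^sub>v v"
  by (rule eq_vecI) (auto simp: row_smult)

lemma eigenspace_kernel:
  fixes A :: "real mat"
  assumes A: "A \<in> carrier_mat N N"
  shows "eigenspace A \<theta> = mat_kernel (A - \<theta> \<cdot>\<^sub>m 1\<^sub>m N)"
proof -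
  have "v \<in> carrier_vec N \<Longrightarrow> (A - \<theta> \<cdot>\<^sub>m 1\<^sub>m N) *\<^sub>v v = A *\<^sub>v v - \<theta> \<cdot>\<^sub>v v" for v
    using A by (simp add: minus_mult_distrib_mat_vec smult_one_mat_vec)
  moreover have "v \<in> carrier_vec N \<Longrightarrow> (A *\<^sub>v v - \<theta> \<cdot>\<^sub>v v = 0\<^sub>v N) = (A *\<^sub>v v = \<theta> \<cdot>\<^sub>v v)" for v
    using A by (auto simp: vec_eq_iff)
  ultimately show ?thesis using A unfolding eigenspace_def mat_kernel_def by auto
qed

lemma mv_index: "A \<in> carrier_mat N N \<Longrightarrow> v \<in> carrier_vec N \<Longrightarrow> j < N \<Longrightarrow>
   (A *\<^sub>v v) $ j = (\<Sum>l<N. A $$ (j,l) * v $ l)"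
  by (simp add: scalar_prod_def atLeast0LessThan)

lemma row_sum: "A \<in> carrier_mat N N \<Longrightarrow> v \<in> carrier_vec N \<Longrightarrow> j < N \<Longrightarrow>
   row A j \<bullet> v = (\<Sum>l<N. A $$ (j,l) * v $ l)"
  by (simp add: scalar_prod_def atLeast0LessThan)

lemma E_iff:
  fixes A :: "real mat"
  assumes A: "A \<in> carrier_mat N N"
  shows "v \<in> eigenspace A \<theta> \<longleftrightarrow> v \<in> carrier_vec N \<and> (\<forall>j<N. (\<Sum>l<N. A $$ (j,l) * v $ l) = \<theta> * v $ j)"
proof -
  have "v \<in> carrier_vec N \<Longrightarrow> (A *\<^sub>v v = \<theta> \<cdot>\<^sub>v v) \<longleftrightarrow> (\<forall>j<N. (A *\<^sub>v v) $ j = (\<theta> \<cdot>\<^sub>v v) $ j)"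
    using A by (metis carrier_matD(1) carrier_vecD dim_mult_mat_vec eq_vecI index_smult_vec(2))
  thus ?thesis unfolding eigenspace_def using A by (auto simp: row_sum)
qed


lemma eig_proj_unique:
  fixes A :: "real mat"
  assumes A: "A \<in> carrier_mat N N"
    and p1: "p1 \<in> eigenspace A \<theta>" "\<forall>w\<in>eigenspace A \<theta>. (x - p1) \<bullet> w = 0"
    and p2: "p2 \<in> eigenspace A \<theta>" "\<forall>w\<in>eigenspace A \<theta>. (x - p2) \<bullet> w = 0"
    and x: "x \<in> carrier_vec N"
  shows "p1 = p2"
proof -
  have c1: "p1 \<in> carrier_vec N" and c2: "p2 \<in> carrier_vec N" using p1 p2 E_iff[OF A] by auto
  have "p1 - p2 \<in> eigenspace A \<theta>"
  proof -
    have "A *\<^sub>v (p1 - p2) = A *\<^sub>v p1 - A *\<^sub>v p2" using A c1 c2 by (simp add: mult_minus_distrib_mat_vec)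
    also have "\<dots> = \<theta> \<cdot>\<^sub>v p1 - \<theta> \<cdot>\<^sub>v p2" using p1(1) p2(1) unfolding eigenspace_def by simp
    also have "\<dots> = \<theta> \<cdot>\<^sub>v (p1 - p2)" using c1 c2 by (auto simp: vec_eq_iff algebra_simps)
    finally show ?thesis unfolding eigenspace_def using c1 c2 A by simp
  qed
  hence "(x - p1) \<bullet> (p1 - p2) = 0" "(x - p2) \<bullet> (p1 - p2) = 0" using p1 p2 by auto
  moreover have "(x - p1) \<bullet> (p1 - p2) = (\<Sum>i<N. (x$i - p1$i) * (p1$i - p2$i))"
    using c1 c2 x by (subst sp_sum[of _ N]) auto
  moreover have "(x - p2) \<bullet> (p1 - p2) = (\<Sum>i<N. (x$i - p2$i) * (p1$i - p2$i))"
    using c1 c2 x by (subst sp_sum[of _ N]) auto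
  ultimately have "(\<Sum>i<N. (x$i - p1$i) * (p1$i - p2$i)) = 0" "(\<Sum>i<N. (x$i - p2$i) * (p1$i - p2$i)) = 0"
    by auto
  moreover have "(\<Sum>i<N. (p1$i - p2$i) * (p1$i - p2$i)) = (\<Sum>i<N. (x$i - p2$i) * (p1$i - p2$i)) - (\<Sum>i<N. (x$i - p1$i) * (p1$i - p2$i))"
    by (subst sum_subtractf[symmetric]) (rule sum.cong, auto simp: algebra_simps)
  ultimately have "(\<Sum>i<N. (p1$i - p2$i) * (p1$i - p2$i)) = 0" by simp
  hence "\<forall>i\<in>{..<N}. (p1$i - p2$i) * (p1$i - p2$i) = 0" by (subst (asm) sum_nonneg_eq_0_iff) auto
  thus ?thesis using c1 c2 by (auto simp: vec_eq_iff)
qed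

lemma eig_proj_prop:
  fixes A :: "real mat"
  assumes A: "A \<in> carrier_mat N N" and x: "x \<in> carrier_vec N"
  shows "eig_proj A \<theta> x \<in> eigenspace A \<theta> \<and> (\<forall>w\<in>eigenspace A \<theta>. (x - eig_proj A \<theta> x) \<bullet> w = 0)"
proof -
  have AK: "A - \<theta> \<cdot>\<^sub>m 1\<^sub>m N \<in> carrier_mat N N" using A by (metis minus_carrier_mat smult_carrier_mat one_carrier_mat)
  obtain B where B: "finite B" "B \<subseteq> eigenspace A \<theta>"
     "\<forall>w \<in> eigenspace A \<theta>. \<exists>c. \<forall>i<N. w $ i = (\<Sum>b\<in>B. c b * b $ i)"
    using fin_span[OF AK] eigenspace_kernel[OF A] by auto
  obtain c where c: "\<forall>k\<in>B. D N (\<lambda>i. x $ i - (\<Sum>k'\<in>B. c k' * k' $ i)) (\<lambda>i. k $ i) = 0"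
    using proj_fun[OF B(1), where x="\<lambda>i. x $ i" and F="\<lambda>b i. b $ i" and N=N] by auto
  define p where "p = vec N (\<lambda>i. \<Sum>b\<in>B. c b * b $ i)"
  have pc: "p \<in> carrier_vec N" unfolding p_def by simp
  have pE: "p \<in> eigenspace A \<theta>" unfolding E_iff[OF A]
  proof (intro conjI allI impI pc)
    fix j assume j: "j < N"
    have "(\<Sum>l<N. A $$ (j,l) * p $ l) = (\<Sum>l<N. \<Sum>b\<in>B. c b * (A $$ (j,l) * b $ l))"
      unfolding p_def by (auto simp: sum_distrib_left algebra_simps intro!: sum.cong)
    also have "\<dots> = (\<Sum>b\<in>B. c b * (\<Sum>l<N. A $$ (j,l) * b $ l))"
      by (subst sum.swap) (simp add: sum_distrib_left)
    also have "\<dots> = (\<Sum>b\<in>B. c b * (\<theta> * b $ j))"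
      using B(2) E_iff[OF A] j by (auto intro!: sum.cong)
    also have "\<dots> = \<theta> * p $ j" unfolding p_def using j by (simp add: sum_distrib_left algebra_simps)
    finally show "(\<Sum>l<N. A $$ (j,l) * p $ l) = \<theta> * p $ j" .
  qed
  have pO: "\<forall>w\<in>eigenspace A \<theta>. (x - p) \<bullet> w = 0"
  proof
    fix w assume w: "w \<in> eigenspace A \<theta>"
    then obtain d where d: "\<forall>i<N. w $ i = (\<Sum>b\<in>B. d b * b $ i)" using B(3) by auto
    have wc: "w \<in> carrier_vec N" using w E_iff[OF A] by auto
    have "(x - p) \<bullet> w = D N (\<lambda>i. x $ i - (\<Sum>k'\<in>B. c k' * k' $ i)) (\<lambda>i. \<Sum>b\<in>B. d b * b $ i)"
      using wc pc x d unfolding D_def by (subst sp_sum[of _ N]) (auto simp: p_def intro!: sum.cong)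
    also have "\<dots> = 0" by (rule D_orth_comb) (use c in auto)
    finally show "(x - p) \<bullet> w = 0" .
  qed
  have "eig_proj A \<theta> x = p" unfolding eig_proj_def
  proof (rule the_equality)
    show "p \<in> eigenspace A \<theta> \<and> (\<forall>w\<in>eigenspace A \<theta>. (x - p) \<bullet> w = 0)" using pE pO by auto
    fix q assume "q \<in> eigenspace A \<theta> \<and> (\<forall>w\<in>eigenspace A \<theta>. (x - q) \<bullet> w = 0)"
    thus "q = p" using eig_proj_unique[OF A _ _ pE pO x] by auto
  qed
  thus ?thesis using pE pO by simp
qed

lemma E_carrier: "A \<in> carrier_mat N N \<Longrightarrow> v \<in> eigenspace A \<theta> \<Longrightarrow> v \<in> carrier_vec N"
  unfolding eigenspace_def by auto

lemma E_lin:
  fixes A :: "real mat"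
  assumes A: "A \<in> carrier_mat N N" and u: "u \<in> eigenspace A \<theta>" and v: "v \<in> eigenspace A \<theta>"
  shows "u - a \<cdot>\<^sub>v v \<in> eigenspace A \<theta>"
proof -
  have c1: "u \<in> carrier_vec N" and c2: "v \<in> carrier_vec N" using u v E_carrier[OF A] by auto
  have "A *\<^sub>v (u - a \<cdot>\<^sub>v v) = A *\<^sub>v u - a \<cdot>\<^sub>v (A *\<^sub>v v)" using A c1 c2
    by (simp add: mult_minus_distrib_mat_vec mult_mat_vec)
  also have "\<dots> = \<theta> \<cdot>\<^sub>v u - a \<cdot>\<^sub>v (\<theta> \<cdot>\<^sub>v v)" using u v unfolding eigenspace_def by simp
  also have "\<dots> = \<theta> \<cdot>\<^sub>v (u - a \<cdot>\<^sub>v v)" using c1 c2 by (auto simp: vec_eq_iff algebra_simps)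
  finally show ?thesis unfolding eigenspace_def using c1 c2 A by simp
qed

lemma self_zero:
  fixes v :: "real vec"
  assumes "v \<in> carrier_vec N" "v \<bullet> v = 0" shows "v = 0\<^sub>v N"
proof -
  have "(\<Sum>i<N. v $ i * v $ i) = 0" using assms sp_sum by metis
  hence "\<forall>i\<in>{..<N}. v $ i * v $ i = 0" by (subst (asm) sum_nonneg_eq_0_iff) auto
  thus ?thesis using assms(1) by (auto simp: vec_eq_iff)
qed

lemma proj_dot:
  fixes A :: "real mat"
  assumes A: "A \<in> carrier_mat N N" and i: "i < N" and w: "w \<in> eigenspace A \<theta>"
  shows "eig_proj A \<theta> (unit_vec N i) \<bullet> w = w $ i"
proof -
  let ?P = "eig_proj A \<theta> (unit_vec N i)"
  have P: "?P \<in> eigenspace A \<theta>" "(unit_vec N i - ?P) \<bullet> w = 0"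
    using eig_proj_prop[OF A unit_vec_carrier[of N i], where \<theta>=\<theta>] w by auto
  have Pc: "?P \<in> carrier_vec N" using P E_carrier[OF A] by auto
  have wc: "w \<in> carrier_vec N" using w E_carrier[OF A] by auto
  have "(unit_vec N i - ?P) \<bullet> w = unit_vec N i \<bullet> w - ?P \<bullet> w"
    using Pc wc by (rule minus_scalar_prod_distrib[OF unit_vec_carrier])
  moreover have "unit_vec N i \<bullet> w = w $ i" using wc i by simp
  ultimately show ?thesis using P by simp
qed

lemma proj_in:
  fixes A :: "real mat"
  assumes A: "A \<in> carrier_mat N N"
  shows "eig_proj A \<theta> (unit_vec N i) \<in> eigenspace A \<theta>"
  using eig_proj_prop[OF A unit_vec_carrier[of N i], where \<theta>=\<theta>] by auto

lemma proj_eq_char: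
  fixes A :: "real mat"
  assumes A: "A \<in> carrier_mat N N" and i: "i < N" and j: "j < N"
  shows "eig_proj A \<theta> (unit_vec N i) = s \<cdot>\<^sub>v eig_proj A \<theta> (unit_vec N j) \<longleftrightarrow> (\<forall>w\<in>eigenspace A \<theta>. w $ i = s * w $ j)"
proof -
  let ?Pi = "eig_proj A \<theta> (unit_vec N i)"
  let ?Pj = "eig_proj A \<theta> (unit_vec N j)"
  have Pi: "?Pi \<in> eigenspace A \<theta>" and Pj: "?Pj \<in> eigenspace A \<theta>" using proj_in[OF A] by auto
  have ci: "?Pi \<in> carrier_vec N" and cj: "?Pj \<in> carrier_vec N" using Pi Pj E_carrier[OF A] by auto
  show ?thesis
  proof
    assume e: "?Pi = s \<cdot>\<^sub>v ?Pj"
    show "\<forall>w\<in>eigenspace A \<theta>. w $ i = s * w $ j"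
    proof
      fix w assume w: "w \<in> eigenspace A \<theta>"
      have wc: "w \<in> carrier_vec N" using w E_carrier[OF A] by auto
      have "w $ i = ?Pi \<bullet> w" using proj_dot[OF A i w] by simp
      also have "\<dots> = s * (?Pj \<bullet> w)" unfolding e using cj wc by simp
      also have "\<dots> = s * w $ j" using proj_dot[OF A j w] by simp
      finally show "w $ i = s * w $ j" .
    qed
  next
    assume H: "\<forall>w\<in>eigenspace A \<theta>. w $ i = s * w $ j"
    define Dv where "Dv = ?Pi - s \<cdot>\<^sub>v ?Pj"
    have DE: "Dv \<in> eigenspace A \<theta>" unfolding Dv_def by (rule E_lin[OF A Pi Pj])
    have Dc: "Dv \<in> carrier_vec N" using DE E_carrier[OF A] by auto
    have "Dv \<bullet> Dv = ?Pi \<bullet> Dv - s * (?Pj \<bullet> Dv)" unfolding Dv_def using ci cj Dc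
      by (simp add: minus_scalar_prod_distrib)
    also have "\<dots> = 0" using proj_dot[OF A i DE] proj_dot[OF A j DE] H DE by simp
    finally have "Dv = 0\<^sub>v N" using self_zero Dc by blast
    thus "?Pi = s \<cdot>\<^sub>v ?Pj" unfolding Dv_def using ci cj by (auto simp: vec_eq_iff)
  qed
qed

lemma proj_nz_char:
  fixes A :: "real mat"
  assumes A: "A \<in> carrier_mat N N" and i: "i < N"
  shows "eig_proj A \<theta> (unit_vec N i) \<noteq> 0\<^sub>v N \<longleftrightarrow> (\<exists>w\<in>eigenspace A \<theta>. w $ i \<noteq> 0)"
proof -
  let ?Pi = "eig_proj A \<theta> (unit_vec N i)"
  have Pi: "?Pi \<in> eigenspace A \<theta>" using proj_in[OF A] by auto
  have ci: "?Pi \<in> carrier_vec N" using Pi E_carrier[OF A] by auto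
  show ?thesis
  proof
    assume nz: "?Pi \<noteq> 0\<^sub>v N"
    have "?Pi $ i \<noteq> 0"
    proof
      assume "?Pi $ i = 0"
      hence "?Pi \<bullet> ?Pi = 0" using proj_dot[OF A i Pi] by simp
      thus False using self_zero[OF ci] nz by blast
    qed
    thus "\<exists>w\<in>eigenspace A \<theta>. w $ i \<noteq> 0" using Pi by blast
  next
    assume "\<exists>w\<in>eigenspace A \<theta>. w $ i \<noteq> 0"
    then obtain w where w: "w \<in> eigenspace A \<theta>" "w $ i \<noteq> 0" by auto
    have wc: "w \<in> carrier_vec N" using w E_carrier[OF A] by auto
    show "?Pi \<noteq> 0\<^sub>v N"
    proof
      assume "?Pi = 0\<^sub>v N"
      hence "?Pi \<bullet> w = 0" using wc by simp
      thus False using proj_dot[OF A i w(1)] w by simp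
    qed
  qed
qed

lemma eigenvalue_char:
  fixes A :: "real mat"
  assumes A: "A \<in> carrier_mat N N"
  shows "eigenvalue A \<theta> \<longleftrightarrow> (\<exists>v\<in>eigenspace A \<theta>. v \<noteq> 0\<^sub>v N)"
  using A unfolding eigenvalue_def eigenvector_def eigenspace_def by auto

lemma supp_char:
  fixes A :: "real mat"
  assumes A: "A \<in> carrier_mat N N" and i: "i < N"
  shows "\<theta> \<in> eig_support A i \<longleftrightarrow> (\<exists>w\<in>eigenspace A \<theta>. w $ i \<noteq> 0)"
proof -
  have d: "dim_row A = N" using A by auto
  have "(\<exists>w\<in>eigenspace A \<theta>. w $ i \<noteq> 0) \<Longrightarrow> eigenvalue A \<theta>"
    unfolding eigenvalue_char[OF A] using i by (metis index_zero_vec(1))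
  thus ?thesis unfolding eig_support_def d using proj_nz_char[OF A i] by auto
qed

lemma Phi_char:
  fixes A :: "real mat"
  assumes A: "A \<in> carrier_mat N N" and i: "i < N" and j: "j < N"
  shows "\<theta> \<in> Phi A s i j \<longleftrightarrow> (\<exists>w\<in>eigenspace A \<theta>. w $ i \<noteq> 0) \<and> (\<forall>w\<in>eigenspace A \<theta>. w $ i = s * w $ j)"
proof -
  have d: "dim_row A = N" using A by auto
  show ?thesis unfolding Phi_def d using supp_char[OF A i] proj_eq_char[OF A i j] d by auto
qed

lemma sc_char:
  fixes A :: "real mat"
  assumes A: "A \<in> carrier_mat N N" and i: "i < N" and j: "j < N"
    and sc: "strongly_cospectral A i j" and ex: "\<exists>w\<in>eigenspace A \<theta>. w $ i \<noteq> 0"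
  shows "(\<forall>w\<in>eigenspace A \<theta>. w $ i = w $ j) \<or> (\<forall>w\<in>eigenspace A \<theta>. w $ i = - w $ j)"
proof -
  have d: "dim_row A = N" using A by auto
  have ev: "eigenvalue A \<theta>" using ex unfolding eigenvalue_char[OF A] using i by (metis index_zero_vec(1))
  let ?Pi = "eig_proj A \<theta> (unit_vec N i)"
  let ?Pj = "eig_proj A \<theta> (unit_vec N j)"
  have o: "?Pi = ?Pj \<or> ?Pi = - ?Pj"
    using sc ev unfolding strongly_cospectral_def d by blast
  have e1: "?Pj = 1 \<cdot>\<^sub>v ?Pj" by simp
  have e2: "- ?Pj = (-1) \<cdot>\<^sub>v ?Pj" by (auto simp: vec_eq_iff)
  from o show ?thesis
  proof
    assume "?Pi = ?Pj"
    hence "?Pi = 1 \<cdot>\<^sub>v ?Pj" by simp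
    thus ?thesis using proj_eq_char[OF A i j, of \<theta> 1] by auto
  next
    assume "?Pi = - ?Pj"
    hence "?Pi = (-1) \<cdot>\<^sub>v ?Pj" using e2 by simp
    thus ?thesis using proj_eq_char[OF A i j, of \<theta> "-1"] by auto
  qed
qed



definition EQP :: "real mat \<Rightarrow> nat \<Rightarrow> nat \<Rightarrow> (nat \<Rightarrow> real poly) \<Rightarrow> real poly \<Rightarrow> bool" where
  "EQP M N r b P \<longleftrightarrow> (\<forall>j<N. [:0,1:] * b j - (\<Sum>l<N. Polynomial.smult (M $$ (j,l)) (b l)) = (if j = r then P else 0))"

lemma cpm_entry:
  assumes "M \<in> carrier_mat N N" "j < N" "l < N"
  shows "char_poly_matrix M $$ (j,l) = (if j = l then [:0,1:] else 0) + [:- (M $$ (j,l)):]"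
  using assms unfolding char_poly_matrix_def by auto

lemma adj_EQP:
  fixes M :: "real mat"
  assumes M: "M \<in> carrier_mat N N" and r: "r < N"
  defines "a \<equiv> \<lambda>l. adj_mat (char_poly_matrix M) $$ (l, r)"
  shows "EQP M N r a (char_poly M)" and "a r = char_poly (mat_delete M r r)"
proof -
  let ?C = "char_poly_matrix M"
  have C: "?C \<in> carrier_mat N N" using M by simp
  note adj = adj_mat[OF C]
  show "EQP M N r a (char_poly M)"
    unfolding EQP_def
  proof (intro allI impI)
    fix j assume j: "j < N"
    have "(?C * adj_mat ?C) $$ (j, r) = (det ?C \<cdot>\<^sub>m 1\<^sub>m N) $$ (j, r)" using adj by simp
    also have "\<dots> = (if j = r then char_poly M else 0)" using j r unfolding char_poly_def by simp
    finally have e: "(?C * adj_mat ?C) $$ (j, r) = (if j = r then char_poly M else 0)" .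
    have "(?C * adj_mat ?C) $$ (j, r) = (\<Sum>l<N. ?C $$ (j,l) * a l)"
      using j r C adj(1) unfolding a_def by (auto simp: scalar_prod_def intro!: sum.cong)
    also have "\<dots> = (\<Sum>l<N. (if j = l then [:0,1:] * a l else 0) - Polynomial.smult (M $$ (j,l)) (a l))"
      by (rule sum.cong, simp, subst cpm_entry[OF M j], auto simp: algebra_simps)
    also have "\<dots> = [:0,1:] * a j - (\<Sum>l<N. Polynomial.smult (M $$ (j,l)) (a l))"
      using j by (simp add: sum_subtractf)
    finally show "[:0,1:] * a j - (\<Sum>l<N. Polynomial.smult (M $$ (j,l)) (a l)) = (if j = r then char_poly M else 0)"
      using e by simp
  qed
  have "a r = cofactor ?C r r" unfolding a_def using r C by (simp add: adj_mat_def)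
  also have "\<dots> = det (mat_delete ?C r r)" unfolding cofactor_def by simp
  also have "mat_delete ?C r r = char_poly_matrix (mat_delete M r r)"
    using r M by (auto simp: mat_delete_def char_poly_matrix_def)
  finally show "a r = char_poly (mat_delete M r r)" unfolding char_poly_def .
qed

lemma div_step:
  fixes M :: "real mat"
  assumes E: "EQP M N r a p" and ar: "a r \<noteq> 0" and r: "r < N"
  obtains t b P where "\<And>j. j < N \<Longrightarrow> a j = [:-\<theta>,1:]^t * b j" "p = [:-\<theta>,1:]^t * P"
    "EQP M N r b P" "\<exists>j<N. poly (b j) \<theta> \<noteq> 0"
proof -
  define S where "S = {Polynomial.order \<theta> (a j) | j. j < N \<and> a j \<noteq> 0}"
  have finS: "finite S" unfolding S_def by auto
  have Sne: "Polynomial.order \<theta> (a r) \<in> S" unfolding S_def using ar r by auto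
  define t where "t = Min S"
  define c where "c = [:-\<theta>,1:]^t"
  have c0: "c \<noteq> 0" unfolding c_def by simp
  have dvd: "c dvd a j" if "j < N" for j
  proof (cases "a j = 0")
    case False
    hence "Polynomial.order \<theta> (a j) \<in> S" unfolding S_def using that by auto
    hence "t \<le> Polynomial.order \<theta> (a j)" unfolding t_def using finS by auto
    hence "c dvd [:-\<theta>,1:]^Polynomial.order \<theta> (a j)" unfolding c_def by (rule le_imp_power_dvd)
    also have "\<dots> dvd a j" by (rule order_1)
    finally show ?thesis .
  qed simp
  define b where "b = (\<lambda>j. a j div c)"
  have ab: "a j = c * b j" if "j < N" for j
    unfolding b_def using dvd[OF that] by simp
  have pexp: "p = [:0,1:] * a r - (\<Sum>l<N. Polynomial.smult (M $$ (r,l)) (a l))"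
    using E r unfolding EQP_def by auto
  have "c dvd p" unfolding pexp
    by (intro dvd_diff dvd_mult dvd[OF r] dvd_sum dvd_smult dvd, auto)
  define P where "P = p div c"
  have pP: "p = c * P" unfolding P_def using \<open>c dvd p\<close> by simp
  have EB: "EQP M N r b P" unfolding EQP_def
  proof (intro allI impI)
    fix j assume j: "j < N"
    have "c * ([:0,1:] * b j - (\<Sum>l<N. Polynomial.smult (M $$ (j,l)) (b l)))
        = [:0,1:] * a j - (\<Sum>l<N. Polynomial.smult (M $$ (j,l)) (a l))"
      using ab j by (simp add: algebra_simps sum_distrib_left mult_smult_right)
    also have "\<dots> = c * (if j = r then P else 0)" using E j pP unfolding EQP_def by auto
    finally show "[:0,1:] * b j - (\<Sum>l<N. Polynomial.smult (M $$ (j,l)) (b l)) = (if j = r then P else 0)"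
      using c0 by simp
  qed
  from Sne have "t \<in> S" unfolding t_def using finS Min_in by blast
  then obtain j0 where j0: "j0 < N" "a j0 \<noteq> 0" "Polynomial.order \<theta> (a j0) = t" unfolding S_def by auto
  have bj0: "b j0 \<noteq> 0" using j0 ab by auto
  have "Polynomial.order \<theta> (a j0) = Polynomial.order \<theta> c + Polynomial.order \<theta> (b j0)"
    using ab[OF j0(1)] c0 bj0 by (simp add: order_mult)
  moreover have "Polynomial.order \<theta> c = t" unfolding c_def by (rule order_power_n_n)
  ultimately have "Polynomial.order \<theta> (b j0) = 0" using j0 by simp
  hence "poly (b j0) \<theta> \<noteq> 0" using bj0 by (simp add: order_root)
  show thesis
    by (rule that[of t b P], insert ab pP EB j0 \<open>poly (b j0) \<theta> \<noteq> 0\<close>, auto simp: c_def)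
qed

lemma EQP_eval:
  assumes "EQP M N r b P" "j < N"
  shows "\<theta> * poly (b j) \<theta> - (\<Sum>l<N. M $$ (j,l) * poly (b l) \<theta>) = (if j = r then poly P \<theta> else 0)"
proof -
  have "poly ([:0,1:] * b j - (\<Sum>l<N. Polynomial.smult (M $$ (j,l)) (b l))) \<theta> = poly (if j = r then P else 0) \<theta>"
    using assms unfolding EQP_def by auto
  thus ?thesis by (simp add: poly_sum)
qed

lemma EQP_deriv:
  assumes "EQP M N r b P" "j < N"
  shows "poly (b j) \<theta> + \<theta> * poly (pderiv (b j)) \<theta> - (\<Sum>l<N. M $$ (j,l) * poly (pderiv (b l)) \<theta>)
     = (if j = r then poly (pderiv P) \<theta> else 0)"
proof -
  have "pderiv ([:0,1:] * b j - (\<Sum>l<N. Polynomial.smult (M $$ (j,l)) (b l))) = pderiv (if j = r then P else 0)"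
    using assms unfolding EQP_def by auto
  hence "poly (pderiv ([:0,1:] * b j - (\<Sum>l<N. Polynomial.smult (M $$ (j,l)) (b l)))) \<theta> = poly (pderiv (if j = r then P else 0)) \<theta>"
    by simp
  thus ?thesis by (simp add: poly_sum pderiv_mult pderiv_diff pderiv_sum pderiv_smult pderiv_pCons algebra_simps)
qed

definition symm :: "real mat \<Rightarrow> nat \<Rightarrow> bool" where
  "symm M N \<longleftrightarrow> (\<forall>j<N. \<forall>l<N. M $$ (j,l) = M $$ (l,j))"

lemma symm_swap:
  assumes "symm M N"
  shows "(\<Sum>j<N. w j * (\<theta> * u j - (\<Sum>l<N. M $$ (j,l) * u l)))
       = (\<Sum>j<N. u j * (\<theta> * w j - (\<Sum>l<N. M $$ (j,l) * w l)))"
proof -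
  have "(\<Sum>j<N. w j * (\<Sum>l<N. M $$ (j,l) * u l)) = (\<Sum>j<N. \<Sum>l<N. w j * M $$ (j,l) * u l)"
    by (simp add: sum_distrib_left mult.assoc)
  also have "\<dots> = (\<Sum>l<N. \<Sum>j<N. w j * M $$ (j,l) * u l)" by (rule sum.swap)
  also have "\<dots> = (\<Sum>l<N. u l * (\<Sum>j<N. M $$ (l,j) * w j))"
    using assms unfolding symm_def by (auto simp: sum_distrib_left intro!: sum.cong)
  finally show ?thesis
    by (simp add: right_diff_distrib sum_subtractf sum_distrib_left algebra_simps)
qed

lemma nonvanish:
  assumes E: "EQP M N r b P" and S: "symm M N" and nz: "\<exists>j<N. poly (b j) \<theta> \<noteq> 0" and r: "r < N"
  shows "poly P \<theta> \<noteq> 0 \<or> poly (b r) \<theta> \<noteq> 0"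
proof (rule ccontr)
  assume "\<not> ?thesis"
  hence P0: "poly P \<theta> = 0" and br: "poly (b r) \<theta> = 0" by auto
  define \<beta> where "\<beta> = (\<lambda>j. poly (b j) \<theta>)"
  define \<gamma> where "\<gamma> = (\<lambda>j. poly (pderiv (b j)) \<theta>)"
  have ker: "\<theta> * \<beta> j - (\<Sum>l<N. M $$ (j,l) * \<beta> l) = 0" if "j < N" for j
    using EQP_eval[OF E that, of \<theta>] P0 unfolding \<beta>_def by auto
  have der: "\<beta> j + (\<theta> * \<gamma> j - (\<Sum>l<N. M $$ (j,l) * \<gamma> l)) = (if j = r then poly (pderiv P) \<theta> else 0)" if "j < N" for j
    using EQP_deriv[OF E that, of \<theta>] unfolding \<beta>_def \<gamma>_def by simp
  have "(\<Sum>j<N. \<beta> j * (\<beta> j + (\<theta> * \<gamma> j - (\<Sum>l<N. M $$ (j,l) * \<gamma> l))))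
     = (\<Sum>j<N. \<beta> j * (if j = r then poly (pderiv P) \<theta> else 0))"
    using der by (auto intro!: sum.cong)
  also have "\<dots> = 0" using br unfolding \<beta>_def by (simp add: if_distrib sum.If_cases)
  finally have A: "(\<Sum>j<N. \<beta> j * \<beta> j) + (\<Sum>j<N. \<beta> j * (\<theta> * \<gamma> j - (\<Sum>l<N. M $$ (j,l) * \<gamma> l))) = 0"
    by (simp add: distrib_left sum.distrib)
  have "(\<Sum>j<N. \<beta> j * (\<theta> * \<gamma> j - (\<Sum>l<N. M $$ (j,l) * \<gamma> l)))
      = (\<Sum>j<N. \<gamma> j * (\<theta> * \<beta> j - (\<Sum>l<N. M $$ (j,l) * \<beta> l)))" by (rule symm_swap[OF S])
  also have "\<dots> = 0" using ker by simp
  finally have "(\<Sum>j<N. \<beta> j * \<beta> j) = 0" using A by simp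
  hence "\<forall>j\<in>{..<N}. \<beta> j * \<beta> j = 0" by (subst (asm) sum_nonneg_eq_0_iff) auto
  thus False using nz unfolding \<beta>_def by auto
qed

definition Rel :: "real mat \<Rightarrow> nat \<Rightarrow> nat \<Rightarrow> real \<Rightarrow> real \<Rightarrow> real \<Rightarrow> bool" where
  "Rel M N r \<theta> t c \<longleftrightarrow> (\<exists>u. (\<forall>j<N. \<theta> * u j - (\<Sum>l<N. M $$ (j,l) * u l) = (if j = r then c else 0)) \<and> u r = t)"

lemma Rel_scale:
  assumes "Rel M N r \<theta> t c" shows "Rel M N r \<theta> (x * t) (x * c)"
proof -
  from assms obtain u where u: "\<forall>j<N. \<theta> * u j - (\<Sum>l<N. M $$ (j,l) * u l) = (if j = r then c else 0)" "u r = t"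
    unfolding Rel_def by auto
  have "\<forall>j<N. \<theta> * (x * u j) - (\<Sum>l<N. M $$ (j,l) * (x * u l)) = (if j = r then x * c else 0)"
  proof (intro allI impI)
    fix j assume "j < N"
    have "\<theta> * (x * u j) - (\<Sum>l<N. M $$ (j,l) * (x * u l)) = x * (\<theta> * u j - (\<Sum>l<N. M $$ (j,l) * u l))"
      by (simp add: algebra_simps sum_distrib_left)
    thus "\<theta> * (x * u j) - (\<Sum>l<N. M $$ (j,l) * (x * u l)) = (if j = r then x * c else 0)"
      using u \<open>j < N\<close> by auto
  qed
  thus ?thesis unfolding Rel_def using u(2) by (intro exI[of _ "\<lambda>j. x * u j"]) auto
qed

lemma Rel_cons:
  assumes S: "symm M N" and r: "r < N" and R1: "Rel M N r \<theta> t c" and R2: "Rel M N r \<theta> t' c'"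
  shows "t * c' = t' * c"
proof -
  from R1 obtain u where u: "\<forall>j<N. \<theta> * u j - (\<Sum>l<N. M $$ (j,l) * u l) = (if j = r then c else 0)" "u r = t"
    unfolding Rel_def by auto
  from R2 obtain u' where u': "\<forall>j<N. \<theta> * u' j - (\<Sum>l<N. M $$ (j,l) * u' l) = (if j = r then c' else 0)" "u' r = t'"
    unfolding Rel_def by auto
  define w where "w = (\<lambda>j. c' * u j - c * u' j)"
  have wk: "\<theta> * w j - (\<Sum>l<N. M $$ (j,l) * w l) = 0" if "j < N" for j
  proof -
    have "\<theta> * w j - (\<Sum>l<N. M $$ (j,l) * w l) = c' * (\<theta> * u j - (\<Sum>l<N. M $$ (j,l) * u l)) - c * (\<theta> * u' j - (\<Sum>l<N. M $$ (j,l) * u' l))"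
      unfolding w_def by (simp add: algebra_simps sum_distrib_left sum_subtractf)
    thus ?thesis using u u' that by auto
  qed
  have key: "d * w r = 0" if "\<forall>j<N. \<theta> * v j - (\<Sum>l<N. M $$ (j,l) * v l) = (if j = r then d else 0)" for v d
  proof -
    have "(\<Sum>j<N. w j * (\<theta> * v j - (\<Sum>l<N. M $$ (j,l) * v l))) = (\<Sum>j<N. v j * (\<theta> * w j - (\<Sum>l<N. M $$ (j,l) * w l)))"
      by (rule symm_swap[OF S])
    also have "\<dots> = 0" using wk by simp
    finally have "(\<Sum>j<N. w j * (if j = r then d else 0)) = 0" using that by simp
    thus ?thesis using r by (simp add: if_distrib sum.If_cases mult.commute)
  qed
  have "c * w r = 0" by (rule key[OF u(1)])
  moreover have "c' * w r = 0" by (rule key[OF u'(1)])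
  moreover have "w r = c' * t - c * t'" unfolding w_def using u u' by simp
  ultimately show ?thesis by (cases "c = 0 \<and> c' = 0") (auto simp: algebra_simps)
qed

lemma Rel_EQP:
  assumes E: "EQP M N r b P" and r: "r < N"
  shows "Rel M N r \<theta> (poly (b r) \<theta>) (poly P \<theta>)"
  unfolding Rel_def using EQP_eval[OF E] by (intro exI[of _ "\<lambda>j. poly (b j) \<theta>"]) auto

lemma not_both_roots:
  fixes p q :: "real poly"
  assumes "coprime p q" "poly p x = 0" "poly q x = 0"
  shows False
proof -
  have "[:-x,1:] dvd p" "[:-x,1:] dvd q" using assms by (simp_all add: poly_eq_0_iff_dvd)
  hence "is_unit [:-x,1:]" using assms(1) coprime_common_divisor by blast
  thus False by (simp add: is_unit_pCons_iff)
qed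

theorem Rel_char:
  fixes M :: "real mat"
  assumes M: "M \<in> carrier_mat N N" and S: "symm M N" and r: "r < N"
  shows "(\<not> rf_pole (alpha M r) \<theta> \<longrightarrow> (Rel M N r \<theta> t c \<longleftrightarrow> c = rf_val (alpha M r) \<theta> * t))
       \<and> (rf_pole (alpha M r) \<theta> \<longrightarrow> (Rel M N r \<theta> t c \<longleftrightarrow> t = 0))"
proof -
  define a where "a \<equiv> \<lambda>l. adj_mat (char_poly_matrix M) $$ (l, r)"
  have E: "EQP M N r a (char_poly M)" and ar: "a r = char_poly (mat_delete M r r)"
    using adj_EQP[OF M r] unfolding a_def by auto
  have Md: "mat_delete M r r \<in> carrier_mat (N-1) (N-1)" using mat_delete_carrier[OF M] .
  have q0: "char_poly (mat_delete M r r) \<noteq> 0" using degree_monic_char_poly[OF Md] by auto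
  obtain t0 b P where ab: "\<And>j. j < N \<Longrightarrow> a j = [:-\<theta>,1:]^t0 * b j" and pP: "char_poly M = [:-\<theta>,1:]^t0 * P"
    and EB: "EQP M N r b P" and nz: "\<exists>j<N. poly (b j) \<theta> \<noteq> 0"
    using div_step[OF E _ r, of \<theta>] ar q0 by metis
  define X where "X = poly (b r) \<theta>"
  define Y where "Y = poly P \<theta>"
  have RXY: "Rel M N r \<theta> X Y" unfolding X_def Y_def by (rule Rel_EQP[OF EB r])
  have XY: "X \<noteq> 0 \<or> Y \<noteq> 0" using nonvanish[OF EB S nz r] unfolding X_def Y_def by auto
  have Q0: "b r \<noteq> 0" using ab[OF r] ar q0 by auto
  have fr: "alpha M r = Fract P (b r)"
    unfolding alpha_def using ab[OF r] pP ar q0 Q0 by (simp add: eq_fract)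
  obtain p0 q0' where pq: "quot_of_fract (alpha M r) = (p0, q0')" by (cases "quot_of_fract (alpha M r)")
  have cop: "coprime p0 q0'" using coprime_quot_of_fract[of "alpha M r"] pq by simp
  have q0n: "q0' \<noteq> 0" using snd_quot_of_fract_nonzero[of "alpha M r"] pq by simp
  have "Fract p0 q0' = Fract P (b r)" by (metis Fract_quot_of_fract fst_conv snd_conv pq fr)
  hence "p0 * b r = P * q0'" using q0n Q0 by (simp add: eq_fract)
  hence rel: "poly p0 \<theta> * X = Y * poly q0' \<theta>" unfolding X_def Y_def by (metis poly_mult)
  have nb: "\<not> (poly p0 \<theta> = 0 \<and> poly q0' \<theta> = 0)" using not_both_roots[OF cop] by blast
  have pole: "rf_pole (alpha M r) \<theta> \<longleftrightarrow> poly q0' \<theta> = 0" unfolding rf_pole_def pq by simp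
  have val: "rf_val (alpha M r) \<theta> = poly p0 \<theta> / poly q0' \<theta>" unfolding rf_val_def pq by simp
  show ?thesis
  proof (intro conjI impI)
    assume np: "\<not> rf_pole (alpha M r) \<theta>"
    hence qn: "poly q0' \<theta> \<noteq> 0" using pole by simp
    define \<alpha> where "\<alpha> = rf_val (alpha M r) \<theta>"
    have Ya: "Y = \<alpha> * X" unfolding \<alpha>_def val using rel qn by (simp add: field_simps)
    hence Xn: "X \<noteq> 0" using XY by auto
    show "Rel M N r \<theta> t c \<longleftrightarrow> c = \<alpha> * t"
    proof
      assume "Rel M N r \<theta> t c"
      from Rel_cons[OF S r this RXY] have "t * Y = X * c" .
      thus "c = \<alpha> * t" using Ya Xn by (simp add: algebra_simps)
    next
      assume c: "c = \<alpha> * t"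
      from Rel_scale[OF RXY, of "t / X"] show "Rel M N r \<theta> t c" using Xn Ya c by (simp add: mult.commute)
    qed
  next
    assume p: "rf_pole (alpha M r) \<theta>"
    hence qz: "poly q0' \<theta> = 0" using pole by simp
    hence pn: "poly p0 \<theta> \<noteq> 0" using nb by simp
    have X0: "X = 0" using rel qz pn by simp
    hence Yn: "Y \<noteq> 0" using XY by simp
    show "Rel M N r \<theta> t c \<longleftrightarrow> t = 0"
    proof
      assume "Rel M N r \<theta> t c"
      from Rel_cons[OF S r this RXY] have "t * Y = X * c" .
      thus "t = 0" using X0 Yn by simp
    next
      assume t: "t = 0"
      from Rel_scale[OF RXY, of "c / Y"] show "Rel M N r \<theta> t c" using Yn X0 t by simp
    qed
  qed
qed



definition nb :: "nat \<Rightarrow> (nat \<Rightarrow> real) \<Rightarrow> nat \<Rightarrow> real" where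
  "nb n x j = (if j = 0 then 0 else x (j - 1)) + (if Suc j < n then x (Suc j) else 0)"

lemma offs_Suc: "offs M (Suc i) = offs M i + dim_row (M i)"
  unfolding offs_def by simp

lemma offs_mono: "i \<le> i' \<Longrightarrow> offs M i \<le> offs M i'"
  unfolding offs_def by (rule sum_mono2) auto

lemma block_unique:
  assumes "offs M i \<le> a" "a < offs M (Suc i)" "offs M i' \<le> a" "a < offs M (Suc i')"
  shows "i = i'"
proof (rule ccontr)
  assume "i \<noteq> i'"
  hence "i < i' \<or> i' < i" by auto
  thus False
  proof
    assume "i < i'" hence "offs M (Suc i) \<le> offs M i'" by (intro offs_mono) auto
    thus False using assms by auto
  next
    assume "i' < i" hence "offs M (Suc i') \<le> offs M i" by (intro offs_mono) auto
    thus False using assms by auto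
  qed
qed

lemma block_exists:
  assumes "a < offs M n"
  shows "\<exists>i<n. offs M i \<le> a \<and> a < offs M (Suc i)"
  using assms
proof (induction n)
  case 0 thus ?case by (simp add: offs_def)
next
  case (Suc n)
  show ?case
  proof (cases "a < offs M n")
    case True thus ?thesis using Suc.IH by (meson less_SucI)
  next
    case False thus ?thesis using Suc.prems by (intro exI[of _ n]) auto
  qed
qed

lemma pathv_block:
  assumes "r i < dim_row (M i)"
  shows "offs M i \<le> pathv M r i" "pathv M r i < offs M (Suc i)"
  using assms unfolding pathv_def offs_Suc by auto

lemma pathv_eq_iff:
  assumes "r i < dim_row (M i)" "r i' < dim_row (M i')" "j < dim_row (M i)"
  shows "offs M i + j = pathv M r i' \<longleftrightarrow> i' = i \<and> j = r i"
proof
  assume e: "offs M i + j = pathv M r i'"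
  have "i = i'" by (rule block_unique[of M i "offs M i + j" i']) (use assms e pathv_block[of r i' M] offs_Suc in auto)
  thus "i' = i \<and> j = r i" using e unfolding pathv_def by auto
qed (auto simp: pathv_def)

lemma offs_le: "i < n \<Longrightarrow> offs M (Suc i) \<le> offs M n"
  by (rule offs_mono) auto

lemma dp_row:
  assumes R: "\<And>i. i < n \<Longrightarrow> r i < dim_row (M i)" and i: "i < n" and j: "j < dim_row (M i)"
  shows "(\<Sum>b<offs M n. decorated_path n M r $$ (offs M i + j, b) * f b)
       = (\<Sum>j'<dim_row (M i). M i $$ (j,j') * f (offs M i + j'))
         + (if j = r i then nb n (\<lambda>i. f (pathv M r i)) i else 0)"
proof -
  define a where "a = offs M i + j"
  have a1: "offs M i \<le> a" "a < offs M (Suc i)" unfolding a_def offs_Suc using j by auto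
  have an: "a < offs M n" using a1 offs_le[OF i, of M] by auto
  define p1 where "p1 = pathv M r (Suc i)"
  define p2 where "p2 = pathv M r (i - 1)"
  define P1 where "P1 = (Suc i < n)"
  define P2 where "P2 = (0 < i)"
  have blocksum: "(\<Sum>i'<n. if offs M i' \<le> a \<and> a < offs M (Suc i') \<and> offs M i' \<le> b \<and> b < offs M (Suc i')
             then M i' $$ (a - offs M i', b - offs M i') else 0)
        = (if offs M i \<le> b \<and> b < offs M (Suc i) then M i $$ (j, b - offs M i) else 0)" for b
  proof -
    have "(\<Sum>i'<n. if offs M i' \<le> a \<and> a < offs M (Suc i') \<and> offs M i' \<le> b \<and> b < offs M (Suc i')
             then M i' $$ (a - offs M i', b - offs M i') else 0)
        = (\<Sum>i'<n. if i' = i then (if offs M i \<le> b \<and> b < offs M (Suc i) then M i $$ (j, b - offs M i) else 0) else 0)"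
    proof (rule sum.cong[OF refl])
      fix i' assume "i' \<in> {..<n}"
      show "(if offs M i' \<le> a \<and> a < offs M (Suc i') \<and> offs M i' \<le> b \<and> b < offs M (Suc i')
             then M i' $$ (a - offs M i', b - offs M i') else 0)
           = (if i' = i then (if offs M i \<le> b \<and> b < offs M (Suc i) then M i $$ (j, b - offs M i) else 0) else 0)"
        using block_unique[of M i a i'] a1 unfolding a_def by auto
    qed
    also have "\<dots> = (if offs M i \<le> b \<and> b < offs M (Suc i) then M i $$ (j, b - offs M i) else 0)"
      using i by simp
    finally show ?thesis .
  qed
  have pa: "a = pathv M r i' \<longleftrightarrow> i' = i \<and> j = r i" if "i' < n" for i'
    using pathv_eq_iff[of r i M i' j] R[OF i] R[OF that] j unfolding a_def by auto
  have edge: "(\<exists>i'. Suc i' < n \<and> ((a = pathv M r i' \<and> b = pathv M r (Suc i')) \<or> (b = pathv M r i' \<and> a = pathv M r (Suc i'))))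
      \<longleftrightarrow> j = r i \<and> ((P1 \<and> b = p1) \<or> (P2 \<and> b = p2))" for b
  proof
    assume "\<exists>i'. Suc i' < n \<and> ((a = pathv M r i' \<and> b = pathv M r (Suc i')) \<or> (b = pathv M r i' \<and> a = pathv M r (Suc i')))"
    then obtain i' where i': "Suc i' < n" "(a = pathv M r i' \<and> b = pathv M r (Suc i')) \<or> (b = pathv M r i' \<and> a = pathv M r (Suc i'))" by auto
    from i'(2) show "j = r i \<and> ((P1 \<and> b = p1) \<or> (P2 \<and> b = p2))"
    proof
      assume h: "a = pathv M r i' \<and> b = pathv M r (Suc i')"
      thus ?thesis using pa[of i'] i'(1) unfolding P1_def p1_def by auto
    next
      assume h: "b = pathv M r i' \<and> a = pathv M r (Suc i')"
      thus ?thesis using pa[of "Suc i'"] i'(1) unfolding P2_def p2_def by auto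
    qed
  next
    assume h: "j = r i \<and> ((P1 \<and> b = p1) \<or> (P2 \<and> b = p2))"
    have ai: "a = pathv M r i" using pa[OF i] h by auto
    from h show "\<exists>i'. Suc i' < n \<and> ((a = pathv M r i' \<and> b = pathv M r (Suc i')) \<or> (b = pathv M r i' \<and> a = pathv M r (Suc i')))"
    proof (elim conjE disjE)
      assume "P1" "b = p1" thus ?thesis using ai unfolding P1_def p1_def by (intro exI[of _ i]) auto
    next
      assume "P2" "b = p2" thus ?thesis using ai i unfolding P2_def p2_def by (intro exI[of _ "i - 1"]) auto
    qed
  qed
  have p12: "P1 \<Longrightarrow> P2 \<Longrightarrow> p1 \<noteq> p2"
  proof -
    assume "P1" "P2"
    have "p2 < offs M (Suc (i - 1))" unfolding p2_def using pathv_block[of r "i - 1" M] R i by auto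
    also have "Suc (i - 1) = i" using \<open>P2\<close> unfolding P2_def by auto
    also have "offs M i \<le> offs M (Suc i)" by (rule offs_mono) auto
    also have "offs M (Suc i) \<le> p1" unfolding p1_def using pathv_block[of r "Suc i" M] R \<open>P1\<close> unfolding P1_def by auto
    finally show "p1 \<noteq> p2" by auto
  qed
  have p1n: "P1 \<Longrightarrow> p1 < offs M n" unfolding P1_def p1_def
    using pathv_block(2)[of r "Suc i" M] R offs_le[of "Suc i" n M] by fastforce
  have p2n: "P2 \<Longrightarrow> p2 < offs M n" unfolding P2_def p2_def
    using pathv_block(2)[of r "i - 1" M] R offs_le[of "i - 1" n M] i by fastforce
  have entry: "decorated_path n M r $$ (a, b) * f b
     = (if offs M i \<le> b \<and> b < offs M (Suc i) then M i $$ (j, b - offs M i) * f b else 0)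
       + ((if b = p1 then (if j = r i \<and> P1 then f b else 0) else 0) + (if b = p2 then (if j = r i \<and> P2 then f b else 0) else 0))"
    if b: "b < offs M n" for b
  proof -
    have "decorated_path n M r $$ (a, b) = (if offs M i \<le> b \<and> b < offs M (Suc i) then M i $$ (j, b - offs M i) else 0)
        + (if j = r i \<and> ((P1 \<and> b = p1) \<or> (P2 \<and> b = p2)) then 1 else 0)"
      unfolding decorated_path_def using an b blocksum[of b] edge[of b] by simp
    thus ?thesis using p12 by (auto simp: algebra_simps)
  qed
  have "(\<Sum>b<offs M n. decorated_path n M r $$ (a, b) * f b)
     = (\<Sum>b<offs M n. (if offs M i \<le> b \<and> b < offs M (Suc i) then M i $$ (j, b - offs M i) * f b else 0))
       + ((\<Sum>b<offs M n. (if b = p1 then (if j = r i \<and> P1 then f b else 0) else 0)) + (\<Sum>b<offs M n. (if b = p2 then (if j = r i \<and> P2 then f b else 0) else 0)))"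
    using entry by (simp add: sum.distrib)
  also have "(\<Sum>b<offs M n. (if offs M i \<le> b \<and> b < offs M (Suc i) then M i $$ (j, b - offs M i) * f b else 0))
      = (\<Sum>b\<in>{offs M i..<offs M (Suc i)}. M i $$ (j, b - offs M i) * f b)"
    using offs_le[OF i, of M] by (intro sum.mono_neutral_cong_right) auto
  also have "\<dots> = (\<Sum>j'<dim_row (M i). M i $$ (j,j') * f (offs M i + j'))"
  proof -
    have "{offs M i..<offs M (Suc i)} = (\<lambda>j'. offs M i + j') ` {..<dim_row (M i)}"
      unfolding offs_Suc by (auto simp: image_iff) (metis add_diff_inverse_nat add_less_cancel_left lessThan_iff not_le)
    thus ?thesis by (simp add: sum.reindex)
  qed
  also have "(\<Sum>b<offs M n. (if b = p1 then (if j = r i \<and> P1 then f b else 0) else 0)) = (if j = r i \<and> P1 then f p1 else 0)"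
    using p1n by (auto simp: sum.delta)
  also have "(\<Sum>b<offs M n. (if b = p2 then (if j = r i \<and> P2 then f b else 0) else 0)) = (if j = r i \<and> P2 then f p2 else 0)"
    using p2n by (auto simp: sum.delta)
  finally show ?thesis unfolding a_def nb_def P1_def P2_def p1_def p2_def by auto
qed


definition DPL :: "nat \<Rightarrow> (nat \<Rightarrow> real mat) \<Rightarrow> (nat \<Rightarrow> nat) \<Rightarrow> real \<Rightarrow> real mat" where
  "DPL n M r L = mat (offs M n) (offs M n) (\<lambda>(a,b).
     decorated_path n M r $$ (a,b) + (if a = pathv M r (n - 1) \<and> b = a then L else 0))"

lemma DPL_loop: "decorated_path_loop k M r s = DPL k M r s"
  unfolding decorated_path_loop_def DPL_def by simp

lemma DPL_0: "decorated_path n M r = DPL n M r 0"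
  by (rule eq_matI) (auto simp: DPL_def decorated_path_def)

lemma DPL_carrier: "DPL n M r L \<in> carrier_mat (offs M n) (offs M n)"
  unfolding DPL_def by simp

lemma dpl_row:
  assumes R: "\<And>i. i < n \<Longrightarrow> r i < dim_row (M i)" and i: "i < n" and j: "j < dim_row (M i)"
  shows "(\<Sum>b<offs M n. DPL n M r L $$ (offs M i + j, b) * f b)
       = (\<Sum>j'<dim_row (M i). M i $$ (j,j') * f (offs M i + j'))
         + (if j = r i then nb n (\<lambda>i. f (pathv M r i)) i + (if i = n - 1 then L * f (pathv M r i) else 0) else 0)"
proof -
  define a where "a = offs M i + j"
  have an: "a < offs M n" using offs_le[OF i, of M] j unfolding a_def offs_Suc by auto
  have pa: "a = pathv M r (n - 1) \<longleftrightarrow> n - 1 = i \<and> j = r i"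
    using pathv_eq_iff[of r i M "n - 1" j] R[OF i] R[of "n - 1"] i j unfolding a_def by auto
  have "(\<Sum>b<offs M n. DPL n M r L $$ (a, b) * f b)
      = (\<Sum>b<offs M n. decorated_path n M r $$ (a, b) * f b) + (\<Sum>b<offs M n. if b = a then (if a = pathv M r (n - 1) then L * f b else 0) else 0)"
  proof -
    have "\<forall>b\<in>{..<offs M n}. DPL n M r L $$ (a, b) * f b = decorated_path n M r $$ (a, b) * f b + (if b = a then (if a = pathv M r (n - 1) then L * f b else 0) else 0)"
      using an by (auto simp: DPL_def algebra_simps)
    thus ?thesis by (simp add: sum.distrib)
  qed
  also have "(\<Sum>b<offs M n. if b = a then (if a = pathv M r (n - 1) then L * f b else 0) else 0)
     = (if a = pathv M r (n - 1) then L * f a else 0)" using an by (simp add: sum.delta)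
  finally show ?thesis using dp_row[where n=n and M=M and r=r, OF R i j, of f] pa unfolding a_def by (auto simp: pathv_def)
qed

lemma dpl_E:
  assumes R: "\<And>i. i < n \<Longrightarrow> r i < dim_row (M i)"
  shows "v \<in> eigenspace (DPL n M r L) \<theta> \<longleftrightarrow> v \<in> carrier_vec (offs M n) \<and>
     (\<forall>i<n. \<forall>j<dim_row (M i). \<theta> * v $ (offs M i + j) - (\<Sum>j'<dim_row (M i). M i $$ (j,j') * v $ (offs M i + j'))
        = (if j = r i then nb n (\<lambda>i. v $ (pathv M r i)) i + (if i = n - 1 then L * v $ (pathv M r i) else 0) else 0))"
    (is "_ \<longleftrightarrow> _ \<and> ?C")
proof -
  have "(\<forall>a<offs M n. (\<Sum>b<offs M n. DPL n M r L $$ (a,b) * v $ b) = \<theta> * v $ a) \<longleftrightarrow> ?C"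
  proof
    assume H: "\<forall>a<offs M n. (\<Sum>b<offs M n. DPL n M r L $$ (a,b) * v $ b) = \<theta> * v $ a"
    show ?C
    proof (intro allI impI)
      fix i j assume i: "i < n" and j: "j < dim_row (M i)"
      have "offs M i + j < offs M n" using offs_le[OF i, of M] j unfolding offs_Suc by auto
      from H[rule_format, OF this] dpl_row[where n=n and M=M and r=r, OF R i j, of L "\<lambda>b. v $ b"]
      show "\<theta> * v $ (offs M i + j) - (\<Sum>j'<dim_row (M i). M i $$ (j,j') * v $ (offs M i + j'))
        = (if j = r i then nb n (\<lambda>i. v $ (pathv M r i)) i + (if i = n - 1 then L * v $ (pathv M r i) else 0) else 0)"
        by auto
    qed
  next
    assume H: ?C
    show "\<forall>a<offs M n. (\<Sum>b<offs M n. DPL n M r L $$ (a,b) * v $ b) = \<theta> * v $ a"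
    proof (intro allI impI)
      fix a assume a: "a < offs M n"
      obtain i where i: "i < n" "offs M i \<le> a" "a < offs M (Suc i)" using block_exists[OF a] by auto
      define j where "j = a - offs M i"
      have j: "j < dim_row (M i)" and aj: "a = offs M i + j" using i unfolding j_def offs_Suc by auto
      from H[rule_format, OF i(1) j] dpl_row[where n=n and M=M and r=r, OF R i(1) j, of L "\<lambda>b. v $ b"]
      show "(\<Sum>b<offs M n. DPL n M r L $$ (a,b) * v $ b) = \<theta> * v $ a" unfolding aj by auto
    qed
  qed
  thus ?thesis unfolding E_iff[OF DPL_carrier] by auto
qed

definition EIG :: "(nat \<Rightarrow> real mat) \<Rightarrow> (nat \<Rightarrow> nat) \<Rightarrow> real \<Rightarrow> nat \<Rightarrow> real \<Rightarrow> (nat \<Rightarrow> real) \<Rightarrow> bool" where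
  "EIG M r \<theta> n L y \<longleftrightarrow> (\<forall>i<n. Rel (M i) (dim_row (M i)) (r i) \<theta> (y i) (nb n y i + (if i = n - 1 then L * y i else 0)))"

lemma nb_cong: "(\<And>i. i < n \<Longrightarrow> x i = x' i) \<Longrightarrow> j < n \<Longrightarrow> nb n x j = nb n x' j"
  unfolding nb_def by auto

lemma C1:
  assumes R: "\<And>i. i < n \<Longrightarrow> r i < dim_row (M i)" and v: "v \<in> eigenspace (DPL n M r L) \<theta>"
  shows "EIG M r \<theta> n L (\<lambda>i. v $ (pathv M r i))"
  unfolding EIG_def Rel_def
proof (intro allI impI)
  fix i assume i: "i < n"
  have H: "\<forall>j<dim_row (M i). \<theta> * v $ (offs M i + j) - (\<Sum>j'<dim_row (M i). M i $$ (j,j') * v $ (offs M i + j'))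
        = (if j = r i then nb n (\<lambda>i. v $ (pathv M r i)) i + (if i = n - 1 then L * v $ (pathv M r i) else 0) else 0)"
    using v i dpl_E[where n=n and M=M and r=r, OF R] by simp
  have pv: "v $ (offs M i + r i) = v $ pathv M r i" by (simp add: pathv_def)
  show "\<exists>u. (\<forall>j<dim_row (M i). \<theta> * u j - (\<Sum>l<dim_row (M i). M i $$ (j, l) * u l) =
       (if j = r i then nb n (\<lambda>i. v $ pathv M r i) i + (if i = n - 1 then L * v $ pathv M r i else 0) else 0)) \<and>
       u (r i) = v $ pathv M r i"
    by (rule exI[of _ "\<lambda>j. v $ (offs M i + j)"]) (use H pv in simp)
qed

definition blk :: "(nat \<Rightarrow> real mat) \<Rightarrow> nat \<Rightarrow> nat \<Rightarrow> nat" where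
  "blk M n a = (THE i. i < n \<and> offs M i \<le> a \<and> a < offs M (Suc i))"

lemma blk_eq: "i < n \<Longrightarrow> j < dim_row (M i) \<Longrightarrow> blk M n (offs M i + j) = i"
  unfolding blk_def
proof (rule the_equality)
  assume "i < n" "j < dim_row (M i)"
  thus "i < n \<and> offs M i \<le> offs M i + j \<and> offs M i + j < offs M (Suc i)" by (simp add: offs_Suc)
  fix i' assume "i' < n \<and> offs M i' \<le> offs M i + j \<and> offs M i + j < offs M (Suc i')"
  thus "i' = i" using block_unique[of M i' "offs M i + j" i] offs_Suc[of M i] \<open>j < dim_row (M i)\<close> by auto
qed

lemma C2:
  assumes R: "\<And>i. i < n \<Longrightarrow> r i < dim_row (M i)" and E: "EIG M r \<theta> n L y"
  shows "\<exists>v\<in>eigenspace (DPL n M r L) \<theta>. \<forall>i<n. v $ (pathv M r i) = y i"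
proof -
  have "\<forall>i. \<exists>u. i < n \<longrightarrow> ((\<forall>j<dim_row (M i). \<theta> * u j - (\<Sum>l<dim_row (M i). M i $$ (j, l) * u l) =
       (if j = r i then nb n y i + (if i = n - 1 then L * y i else 0) else 0)) \<and> u (r i) = y i)"
    using E unfolding EIG_def Rel_def by auto
  from choice[OF this] obtain U where U: "\<And>i. i < n \<Longrightarrow> (\<forall>j<dim_row (M i). \<theta> * U i j - (\<Sum>l<dim_row (M i). M i $$ (j, l) * U i l) =
       (if j = r i then nb n y i + (if i = n - 1 then L * y i else 0) else 0)) \<and> U i (r i) = y i"
    by blast
  define v where "v = vec (offs M n) (\<lambda>a. U (blk M n a) (a - offs M (blk M n a)))"
  have vi: "v $ (offs M i + j) = U i j" if "i < n" "j < dim_row (M i)" for i j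
  proof -
    have "offs M i + j < offs M n" using offs_le[OF that(1), of M] that(2) unfolding offs_Suc by auto
    thus ?thesis unfolding v_def using blk_eq[where M=M, OF that] by simp
  qed
  have vp: "v $ (pathv M r i) = y i" if "i < n" for i
    using vi[OF that R[OF that]] U[OF that] unfolding pathv_def by simp
  have cond: "\<forall>i<n. \<forall>j<dim_row (M i). \<theta> * v $ (offs M i + j) - (\<Sum>j'<dim_row (M i). M i $$ (j,j') * v $ (offs M i + j'))
        = (if j = r i then nb n (\<lambda>i. v $ (pathv M r i)) i + (if i = n - 1 then L * v $ (pathv M r i) else 0) else 0)"
  proof (intro allI impI)
    fix i j assume i: "i < n" and j: "j < dim_row (M i)"
    have nbe: "nb n (\<lambda>i. v $ pathv M r i) i = nb n y i" by (rule nb_cong[OF _ i]) (use vp in auto)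
    show "\<theta> * v $ (offs M i + j) - (\<Sum>j'<dim_row (M i). M i $$ (j, j') * v $ (offs M i + j')) =
         (if j = r i then nb n (\<lambda>i. v $ pathv M r i) i + (if i = n - 1 then L * v $ pathv M r i else 0) else 0)"
      using U[OF i] j vi[OF i] vp[OF i] nbe by auto
  qed
  have c: "v \<in> carrier_vec (offs M n)" unfolding v_def by simp
  have "v \<in> eigenspace (DPL n M r L) \<theta>"
    using dpl_E[where n=n and M=M and r=r and v=v and L=L and \<theta>=\<theta>, OF R] c cond by blast
  thus ?thesis using vp by auto
qed


lemma pathv_lt: "(\<And>i. i < n \<Longrightarrow> r i < dim_row (M i)) \<Longrightarrow> i < n \<Longrightarrow> pathv M r i < offs M n"
  using pathv_block(2)[of r i M] offs_le[of i n M] by fastforce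

lemma C_supp:
  assumes R: "\<And>i. i < n \<Longrightarrow> r i < dim_row (M i)" and n: "0 < n"
  shows "\<theta> \<in> eig_support (DPL n M r L) (pathv M r 0) \<longleftrightarrow> (\<exists>y. EIG M r \<theta> n L y \<and> y 0 \<noteq> 0)"
proof -
  have p0: "pathv M r 0 < offs M n" using pathv_lt[where n=n and M=M and r=r, OF R n] by blast
  have "(\<exists>w\<in>eigenspace (DPL n M r L) \<theta>. w $ pathv M r 0 \<noteq> 0) \<longleftrightarrow> (\<exists>y. EIG M r \<theta> n L y \<and> y 0 \<noteq> 0)"
  proof
    assume "\<exists>w\<in>eigenspace (DPL n M r L) \<theta>. w $ pathv M r 0 \<noteq> 0"
    then obtain w where "w\<in>eigenspace (DPL n M r L) \<theta>" "w $ pathv M r 0 \<noteq> 0" by blast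
    thus "\<exists>y. EIG M r \<theta> n L y \<and> y 0 \<noteq> 0" using C1[where n=n and M=M and r=r, OF R] by blast
  next
    assume "\<exists>y. EIG M r \<theta> n L y \<and> y 0 \<noteq> 0"
    then obtain y where "EIG M r \<theta> n L y" "y 0 \<noteq> 0" by blast
    thus "\<exists>w\<in>eigenspace (DPL n M r L) \<theta>. w $ pathv M r 0 \<noteq> 0" using C2[where n=n and M=M and r=r, OF R] n by force
  qed
  thus ?thesis using supp_char[OF DPL_carrier p0] by simp
qed

lemma C_Phi:
  assumes R: "\<And>i. i < n \<Longrightarrow> r i < dim_row (M i)" and n: "0 < n"
  shows "\<theta> \<in> Phi (DPL n M r L) s (pathv M r 0) (pathv M r (n - 1)) \<longleftrightarrow>
     (\<exists>y. EIG M r \<theta> n L y \<and> y 0 \<noteq> 0) \<and> (\<forall>y. EIG M r \<theta> n L y \<longrightarrow> y 0 = s * y (n - 1))"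
proof -
  have p0: "pathv M r 0 < offs M n" using pathv_lt[where n=n and M=M and r=r, OF R n] by blast
  have p1: "pathv M r (n - 1) < offs M n" using pathv_lt[where n=n and M=M and r=r, OF R] n by simp
  have a: "(\<exists>w\<in>eigenspace (DPL n M r L) \<theta>. w $ pathv M r 0 \<noteq> 0) \<longleftrightarrow> (\<exists>y. EIG M r \<theta> n L y \<and> y 0 \<noteq> 0)"
  proof
    assume "\<exists>w\<in>eigenspace (DPL n M r L) \<theta>. w $ pathv M r 0 \<noteq> 0"
    then obtain w where "w\<in>eigenspace (DPL n M r L) \<theta>" "w $ pathv M r 0 \<noteq> 0" by blast
    thus "\<exists>y. EIG M r \<theta> n L y \<and> y 0 \<noteq> 0" using C1[where n=n and M=M and r=r, OF R] by blast
  next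
    assume "\<exists>y. EIG M r \<theta> n L y \<and> y 0 \<noteq> 0"
    then obtain y where "EIG M r \<theta> n L y" "y 0 \<noteq> 0" by blast
    thus "\<exists>w\<in>eigenspace (DPL n M r L) \<theta>. w $ pathv M r 0 \<noteq> 0" using C2[where n=n and M=M and r=r, OF R] n by force
  qed
  have b: "(\<forall>w\<in>eigenspace (DPL n M r L) \<theta>. w $ pathv M r 0 = s * w $ pathv M r (n - 1)) \<longleftrightarrow> (\<forall>y. EIG M r \<theta> n L y \<longrightarrow> y 0 = s * y (n - 1))"
  proof
    assume H: "\<forall>w\<in>eigenspace (DPL n M r L) \<theta>. w $ pathv M r 0 = s * w $ pathv M r (n - 1)"
    show "\<forall>y. EIG M r \<theta> n L y \<longrightarrow> y 0 = s * y (n - 1)"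
    proof (intro allI impI)
      fix y assume "EIG M r \<theta> n L y"
      from C2[where n=n and M=M and r=r, OF R this] obtain v where "v \<in> eigenspace (DPL n M r L) \<theta>" "\<forall>i<n. v $ pathv M r i = y i" by auto
      thus "y 0 = s * y (n - 1)" using H n by force
    qed
  next
    assume H: "\<forall>y. EIG M r \<theta> n L y \<longrightarrow> y 0 = s * y (n - 1)"
    show "\<forall>w\<in>eigenspace (DPL n M r L) \<theta>. w $ pathv M r 0 = s * w $ pathv M r (n - 1)"
      using H C1[where n=n and M=M and r=r, OF R] by blast
  qed
  show ?thesis unfolding Phi_char[OF DPL_carrier p0 p1] a b ..
qed

lemma C_sc:
  assumes R: "\<And>i. i < n \<Longrightarrow> r i < dim_row (M i)" and n: "0 < n"
    and sc: "strongly_cospectral (DPL n M r L) (pathv M r 0) (pathv M r (n - 1))"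
    and ex: "EIG M r \<theta> n L y0" "y0 0 \<noteq> 0"
  shows "(\<forall>y. EIG M r \<theta> n L y \<longrightarrow> y 0 = y (n - 1)) \<or> (\<forall>y. EIG M r \<theta> n L y \<longrightarrow> y 0 = - y (n - 1))"
proof -
  have p0: "pathv M r 0 < offs M n" using pathv_lt[where n=n and M=M and r=r, OF R n] by blast
  have p1: "pathv M r (n - 1) < offs M n" using pathv_lt[where n=n and M=M and r=r, OF R] n by simp
  have exw: "\<exists>w\<in>eigenspace (DPL n M r L) \<theta>. w $ pathv M r 0 \<noteq> 0"
    using C2[where n=n and M=M and r=r, OF R ex(1)] ex(2) n by force
  from sc_char[OF DPL_carrier p0 p1 sc exw]
  show ?thesis
  proof
    assume H: "\<forall>w\<in>eigenspace (DPL n M r L) \<theta>. w $ pathv M r 0 = w $ pathv M r (n - 1)"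
    have "\<forall>y. EIG M r \<theta> n L y \<longrightarrow> y 0 = y (n - 1)"
    proof (intro allI impI)
      fix y assume "EIG M r \<theta> n L y"
      from C2[where n=n and M=M and r=r, OF R this] obtain v where "v \<in> eigenspace (DPL n M r L) \<theta>" "\<forall>i<n. v $ pathv M r i = y i" by auto
      thus "y 0 = y (n - 1)" using H n by force
    qed
    thus ?thesis ..
  next
    assume H: "\<forall>w\<in>eigenspace (DPL n M r L) \<theta>. w $ pathv M r 0 = - w $ pathv M r (n - 1)"
    have "\<forall>y. EIG M r \<theta> n L y \<longrightarrow> y 0 = - y (n - 1)"
    proof (intro allI impI)
      fix y assume "EIG M r \<theta> n L y"
      from C2[where n=n and M=M and r=r, OF R this] obtain v where "v \<in> eigenspace (DPL n M r L) \<theta>" "\<forall>i<n. v $ pathv M r i = y i" by auto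
      thus "y 0 = - y (n - 1)" using H n by force
    qed
    thus ?thesis ..
  qed
qed

lemma wpath_carrier: "wpath n d \<in> carrier_mat n n" unfolding wpath_def by simp

lemma wpath_row:
  assumes j: "j < n"
  shows "(\<Sum>l<n. wpath n d $$ (j,l) * x l) = d j * x j + nb n x j"
proof -
  have "\<forall>l\<in>{..<n}. wpath n d $$ (j,l) * x l = (if l = j then d j * x l else 0) + (if l = j - 1 \<and> 0 < j then x l else 0) + (if l = Suc j then x l else 0)"
    using j unfolding wpath_def by auto
  hence "(\<Sum>l<n. wpath n d $$ (j,l) * x l) = (\<Sum>l<n. (if l = j then d j * x l else 0)) + (\<Sum>l<n. (if l = j - 1 \<and> 0 < j then x l else 0)) + (\<Sum>l<n. (if l = Suc j then x l else 0))"
    by (simp add: sum.distrib)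
  also have "(\<Sum>l<n. (if l = j - 1 \<and> 0 < j then x l else 0)) = (if 0 < j then x (j - 1) else 0)"
  proof (cases "0 < j")
    case True thus ?thesis using j by (simp add: sum.delta)
  qed simp
  finally show ?thesis using j unfolding nb_def by (simp add: sum.delta)
qed

definition WE :: "nat \<Rightarrow> (nat \<Rightarrow> real) \<Rightarrow> real \<Rightarrow> (nat \<Rightarrow> real) \<Rightarrow> bool" where
  "WE n d \<theta> x \<longleftrightarrow> (\<forall>j<n. d j * x j + nb n x j = \<theta> * x j)"

lemma wpath_E:
  "v \<in> eigenspace (wpath n d) \<theta> \<longleftrightarrow> v \<in> carrier_vec n \<and> WE n d \<theta> (\<lambda>j. v $ j)"
  unfolding E_iff[OF wpath_carrier] WE_def using wpath_row by auto

lemma WE_vec: "WE n d \<theta> x \<Longrightarrow> vec n x \<in> eigenspace (wpath n d) \<theta>"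
proof -
  assume H: "WE n d \<theta> x"
  have "WE n d \<theta> (\<lambda>j. vec n x $ j)" using H unfolding WE_def
  proof (intro allI impI)
    fix j assume j: "j < n" and H': "\<forall>j<n. d j * x j + nb n x j = \<theta> * x j"
    have "nb n (\<lambda>j. vec n x $ j) j = nb n x j" by (rule nb_cong[OF _ j]) simp
    thus "d j * vec n x $ j + nb n (\<lambda>j. vec n x $ j) j = \<theta> * vec n x $ j" using H' j by simp
  qed
  thus ?thesis unfolding wpath_E by simp
qed

lemma W_supp:
  assumes n: "0 < n"
  shows "\<theta> \<in> eig_support (wpath n d) 0 \<longleftrightarrow> (\<exists>x. WE n d \<theta> x \<and> x 0 \<noteq> 0)"
  unfolding supp_char[OF wpath_carrier n]
proof
  assume "\<exists>w\<in>eigenspace (wpath n d) \<theta>. w $ 0 \<noteq> 0"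
  then obtain w where w: "w \<in> eigenspace (wpath n d) \<theta>" "w $ 0 \<noteq> 0" by blast
  have "WE n d \<theta> (\<lambda>j. w $ j)" using w(1) wpath_E by blast
  thus "\<exists>x. WE n d \<theta> x \<and> x 0 \<noteq> 0" using w(2) by blast
next
  assume "\<exists>x. WE n d \<theta> x \<and> x 0 \<noteq> 0"
  then obtain x where "WE n d \<theta> x" "x 0 \<noteq> 0" by blast
  thus "\<exists>w\<in>eigenspace (wpath n d) \<theta>. w $ 0 \<noteq> 0" using WE_vec n by force
qed

lemma W_Phi:
  assumes n: "0 < n"
  shows "\<theta> \<in> Phi (wpath n d) s 0 (n - 1) \<longleftrightarrow> (\<exists>x. WE n d \<theta> x \<and> x 0 \<noteq> 0) \<and> (\<forall>x. WE n d \<theta> x \<longrightarrow> x 0 = s * x (n - 1))"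
proof -
  have n1: "n - 1 < n" using n by simp
  have a: "(\<exists>w\<in>eigenspace (wpath n d) \<theta>. w $ 0 \<noteq> 0) \<longleftrightarrow> (\<exists>x. WE n d \<theta> x \<and> x 0 \<noteq> 0)"
    using W_supp[OF n] supp_char[OF wpath_carrier n] by simp
  have b: "(\<forall>w\<in>eigenspace (wpath n d) \<theta>. w $ 0 = s * w $ (n - 1)) \<longleftrightarrow> (\<forall>x. WE n d \<theta> x \<longrightarrow> x 0 = s * x (n - 1))"
  proof
    assume H: "\<forall>w\<in>eigenspace (wpath n d) \<theta>. w $ 0 = s * w $ (n - 1)"
    show "\<forall>x. WE n d \<theta> x \<longrightarrow> x 0 = s * x (n - 1)"
    proof (intro allI impI)
      fix x assume "WE n d \<theta> x"
      from H[rule_format, OF WE_vec[OF this]] show "x 0 = s * x (n - 1)" using n n1 by simp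
    qed
  next
    assume H: "\<forall>x. WE n d \<theta> x \<longrightarrow> x 0 = s * x (n - 1)"
    show "\<forall>w\<in>eigenspace (wpath n d) \<theta>. w $ 0 = s * w $ (n - 1)"
    proof
      fix w assume "w \<in> eigenspace (wpath n d) \<theta>"
      hence "WE n d \<theta> (\<lambda>j. w $ j)" using wpath_E by blast
      thus "w $ 0 = s * w $ (n - 1)" using H by blast
    qed
  qed
  show ?thesis unfolding Phi_char[OF wpath_carrier n n1] a b ..
qed

definition PE :: "nat \<Rightarrow> (nat \<Rightarrow> real) \<Rightarrow> (nat \<Rightarrow> real) \<Rightarrow> bool" where
  "PE n a y \<longleftrightarrow> (\<forall>j<n. nb n y j = a j * y j)"

definition PL :: "nat \<Rightarrow> (nat \<Rightarrow> real) \<Rightarrow> real \<Rightarrow> (nat \<Rightarrow> real) \<Rightarrow> bool" where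
  "PL k a s x \<longleftrightarrow> (\<forall>j<k. nb k x j + (if j = k - 1 then s * x j else 0) = a j * x j)"

lemma PE_unique:
  assumes y: "PE n a y" and w: "PE n a w"
  shows "j < n \<Longrightarrow> w j * y 0 = w 0 * y j"
proof (induction j rule: less_induct)
  case (less j)
  show ?case
  proof (cases j)
    case 0 thus ?thesis by simp
  next
    case (Suc m)
    show ?thesis
    proof (cases m)
      case 0
      have "nb n y 0 = a 0 * y 0" "nb n w 0 = a 0 * w 0" using y w less.prems unfolding PE_def by auto
      hence "y 1 = a 0 * y 0" "w 1 = a 0 * w 0" using less.prems Suc 0 unfolding nb_def by auto
      thus ?thesis using Suc 0 by (simp add: algebra_simps)
    next
      case (Suc m')
      have jm: "j = Suc (Suc m')" using \<open>j = Suc m\<close> Suc by simp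
      have "nb n y (Suc m') = a (Suc m') * y (Suc m')" "nb n w (Suc m') = a (Suc m') * w (Suc m')"
        using y w less.prems jm unfolding PE_def by auto
      hence e: "y m' + y j = a (Suc m') * y (Suc m')" "w m' + w j = a (Suc m') * w (Suc m')"
        using less.prems jm unfolding nb_def by auto
      have i1: "w m' * y 0 = w 0 * y m'" using less.IH[of m'] less.prems jm by simp
      have i2: "w (Suc m') * y 0 = w 0 * y (Suc m')" using less.IH[of "Suc m'"] less.prems jm by simp
      have "w j * y 0 = (a (Suc m') * w (Suc m') - w m') * y 0" using e by simp
      also have "\<dots> = a (Suc m') * (w (Suc m') * y 0) - w m' * y 0" by (simp add: algebra_simps)
      also have "\<dots> = w 0 * (a (Suc m') * y (Suc m') - y m')" using i1 i2 by (simp add: algebra_simps)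
      also have "\<dots> = w 0 * y j" using e by simp
      finally show ?thesis .
    qed
  qed
qed

lemma fold_equiv:
  assumes n: "n = 2 * k" and k: "1 \<le> k" and s: "s * s = 1" and sym: "\<And>j. j < n \<Longrightarrow> a j = a (n - 1 - j)"
  shows "((\<exists>y. PE n a y \<and> y 0 \<noteq> 0) \<and> (\<forall>y. PE n a y \<longrightarrow> y 0 = s * y (n - 1))) \<longleftrightarrow> (\<exists>x. PL k a s x \<and> x 0 \<noteq> 0)"
proof
  assume "(\<exists>y. PE n a y \<and> y 0 \<noteq> 0) \<and> (\<forall>y. PE n a y \<longrightarrow> y 0 = s * y (n - 1))"
  then obtain y where y: "PE n a y" "y 0 \<noteq> 0" and all: "\<forall>y. PE n a y \<longrightarrow> y 0 = s * y (n - 1)" by blast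
  define y' where "y' = (\<lambda>j. y (n - 1 - j))"
  have y': "PE n a y'" unfolding PE_def
  proof (intro allI impI)
    fix j assume j: "j < n"
    have e: "nb n y (n - 1 - j) = a (n - 1 - j) * y (n - 1 - j)" using y(1) j unfolding PE_def by auto
    have "nb n y' j = nb n y (n - 1 - j)" unfolding nb_def y'_def using j
      by (auto simp: Suc_diff_Suc diff_diff_add)
    thus "nb n y' j = a j * y' j" using e sym[OF j] unfolding y'_def by simp
  qed
  define z where "z = (\<lambda>j. y j + s * y' j)"
  have z: "PE n a z" unfolding PE_def
  proof (intro allI impI)
    fix j assume j: "j < n"
    have "nb n z j = nb n y j + s * nb n y' j" unfolding nb_def z_def by (simp add: algebra_simps)
    thus "nb n z j = a j * z j" using y(1) y' j unfolding PE_def z_def by (simp add: algebra_simps)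
  qed
  have y0: "y 0 = s * y (n - 1)" using all y(1) by blast
  have z0: "z 0 = 2 * y 0" unfolding z_def y'_def using y0 s by (simp add: algebra_simps)
  have zs: "z (n - 1 - j) = s * z j" if "j < n" for j
  proof -
    have "n - 1 - (n - 1 - j) = j" using that by simp
    hence "z (n - 1 - j) = y (n - 1 - j) + s * y j" unfolding z_def y'_def by simp
    also have "\<dots> = s * (s * y (n - 1 - j)) + s * y j" using s by (simp add: mult.assoc[symmetric])
    finally show ?thesis unfolding z_def y'_def by (simp add: algebra_simps)
  qed
  have "PL k a s z" unfolding PL_def
  proof (intro allI impI)
    fix j assume j: "j < k"
    have e: "nb n z j = a j * z j" using z j n unfolding PE_def by auto
    show "nb k z j + (if j = k - 1 then s * z j else 0) = a j * z j"
    proof (cases "j = k - 1")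
      case True
      have "z k = s * z (k - 1)" using zs[of "k - 1"] n k by (simp add: True)
      hence "nb n z j = nb k z j + s * z j" unfolding nb_def using True n k by auto
      thus ?thesis using e True by simp
    next
      case False
      hence "nb n z j = nb k z j" unfolding nb_def using j n by auto
      thus ?thesis using e False by simp
    qed
  qed
  thus "\<exists>x. PL k a s x \<and> x 0 \<noteq> 0" using z0 y(2) by (intro exI[of _ z]) auto
next
  assume "\<exists>x. PL k a s x \<and> x 0 \<noteq> 0"
  then obtain x where x: "PL k a s x" "x 0 \<noteq> 0" by blast
  define y where "y = (\<lambda>j. if j < k then x j else s * x (n - 1 - j))"
  have xe: "nb k x j + (if j = k - 1 then s * x j else 0) = a j * x j" if "j < k" for j
    using x(1) that unfolding PL_def by auto
  have yP: "PE n a y" unfolding PE_def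
  proof (intro allI impI)
    fix j assume j: "j < n"
    consider "Suc j < k" | "j = k - 1" | "j = k" | "k < j" by linarith
    thus "nb n y j = a j * y j"
    proof cases
      case 1
      have "nb n y j = nb k x j" unfolding nb_def y_def using 1 n by auto
      moreover have "j \<noteq> k - 1" using 1 by auto
      ultimately show ?thesis using xe[of j] 1 unfolding y_def by auto
    next
      case 2
      have "y k = s * x (k - 1)" unfolding y_def using n by (auto intro!: arg_cong[where f=x])
      hence "nb n y j = nb k x j + s * x j" unfolding nb_def y_def using 2 n k by auto
      thus ?thesis using xe[of j] 2 k unfolding y_def by auto
    next
      case 3
      have e: "nb k x (k - 1) + s * x (k - 1) = a (k - 1) * x (k - 1)" using xe[of "k - 1"] k by auto
      have ak: "a k = a (k - 1)" using sym[of k] n k by auto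
      have yk: "y k = s * x (k - 1)" unfolding y_def using n by (auto intro!: arg_cong[where f=x])
      have "nb n y k = x (k - 1) + (if Suc k < n then s * x (k - 2) else 0)"
        unfolding nb_def y_def using n k by (auto intro!: arg_cong[where f=x])
      also have "\<dots> = s * (nb k x (k - 1) + s * x (k - 1))"
        unfolding nb_def using n k s by (auto simp: algebra_simps numeral_2_eq_2 intro!: arg_cong[where f=x])
      also have "\<dots> = a k * y k" using e ak yk by (simp add: algebra_simps)
      finally show ?thesis using 3 by simp
    next
      case 4
      define j' where "j' = n - 1 - j"
      have j': "Suc j' < k" "j = n - 1 - j'" unfolding j'_def using 4 n j by auto
      have "nb n y j = s * nb k x j'" unfolding nb_def y_def using 4 n j j'
        by (auto simp: algebra_simps intro!: arg_cong[where f=x])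
      also have "\<dots> = s * (a j' * x j')" using xe[of j'] j' by (auto split: if_splits)
      also have "\<dots> = a j * y j"
      proof -
        have yj: "y j = s * x j'" unfolding y_def j'_def using 4 by simp
        have aj: "a j = a j'" using sym[OF j] unfolding j'_def by simp
        show ?thesis unfolding yj aj by (simp add: algebra_simps)
      qed
      finally show ?thesis .
    qed
  qed
  have y0: "y 0 = x 0" unfolding y_def using k by simp
  have yn: "y (n - 1) = s * x 0"
  proof -
    have "\<not> n - 1 < k" "n - 1 - (n - 1) = 0" using n k by auto
    thus ?thesis unfolding y_def by simp
  qed
  have "\<forall>w. PE n a w \<longrightarrow> w 0 = s * w (n - 1)"
  proof (intro allI impI)
    fix w assume w: "PE n a w"
    have "w (n - 1) * y 0 = w 0 * y (n - 1)" using PE_unique[OF yP w, of "n - 1"] n k by simp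
    hence "w (n - 1) * x 0 = (w 0 * s) * x 0" unfolding y0 yn by (simp add: algebra_simps)
    hence "w (n - 1) = w 0 * s" using x(2) by simp
    hence "s * w (n - 1) = w 0 * (s * s)" by (simp add: algebra_simps)
    thus "w 0 = s * w (n - 1)" using s by simp
  qed
  thus "(\<exists>y. PE n a y \<and> y 0 \<noteq> 0) \<and> (\<forall>y. PE n a y \<longrightarrow> y 0 = s * y (n - 1))"
    using yP y0 x(2) by auto
qed


lemma Rel_00: "Rel M N r \<theta> 0 0"
  unfolding Rel_def by (intro exI[of _ "\<lambda>_. 0"]) simp

lemma pole_trunc:
  assumes n: "n = 2 * k" and k: "1 \<le> k" and R: "\<And>i. i < n \<Longrightarrow> r i < dim_row (M i)"
    and MC: "\<And>i. i < n \<Longrightarrow> M i \<in> carrier_mat (dim_row (M i)) (dim_row (M i))"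
    and S: "\<And>i. i < n \<Longrightarrow> symm (M i) (dim_row (M i))"
    and sc: "strongly_cospectral (DPL n M r 0) (pathv M r 0) (pathv M r (n - 1))"
    and i: "i < k" and pole: "rf_pole (alpha (M i) (r i)) \<theta>"
    and Y: "EIG M r \<theta> n 0 y \<or> EIG M r \<theta> k s y" and y0: "y 0 \<noteq> 0"
  shows False
proof -
  have kn: "k \<le> n" using n by simp
  have in_: "i < n" using i kn by simp
  have RP: "Rel (M i) (dim_row (M i)) (r i) \<theta> t c \<longleftrightarrow> t = 0" for t c
    using Rel_char[OF MC[OF in_] S[OF in_] R[OF in_], of \<theta>] pole by blast
  have yi: "y i = 0"
  proof -
    from Y have "\<exists>c. Rel (M i) (dim_row (M i)) (r i) \<theta> (y i) c"
      unfolding EIG_def using i kn by (meson less_le_trans)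
    thus ?thesis using RP by blast
  qed
  have i0: "i \<noteq> 0" using yi y0 by (metis)
  have low: "Rel (M j) (dim_row (M j)) (r j) \<theta> (y j) (nb n y j)" if j: "j < i" for j
  proof -
    from Y show ?thesis
    proof
      assume "EIG M r \<theta> n 0 y"
      hence "Rel (M j) (dim_row (M j)) (r j) \<theta> (y j) (nb n y j + (if j = n - 1 then 0 * y j else 0))"
        using j in_ unfolding EIG_def by auto
      moreover have "nb n y j + (if j = n - 1 then 0 * y j else 0) = nb n y j" by simp
      ultimately show ?thesis by metis
    next
      assume E: "EIG M r \<theta> k s y"
      have "j < k" "j \<noteq> k - 1" using j i by auto
      moreover have "nb k y j = nb n y j" unfolding nb_def using j i kn by auto
      ultimately show ?thesis using E unfolding EIG_def by auto
    qed
  qed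
  define z where "z = (\<lambda>j. if j < i then y j else 0)"
  have zE: "EIG M r \<theta> n 0 z" unfolding EIG_def
  proof (intro allI impI)
    fix j assume j: "j < n"
    consider "j < i" | "j = i" | "i < j" by linarith
    thus "Rel (M j) (dim_row (M j)) (r j) \<theta> (z j) (nb n z j + (if j = n - 1 then 0 * z j else 0))"
    proof cases
      case 1
      have "Suc j < i \<or> Suc j = i" using 1 by auto
      hence e1: "nb n z j = nb n y j" unfolding nb_def z_def using 1 yi by auto
      have e2: "nb n z j + (if j = n - 1 then 0 * z j else 0) = nb n y j" using e1 by simp
      have e3: "z j = y j" unfolding z_def using 1 by simp
      show ?thesis unfolding e2 unfolding e3 by (rule low[OF 1])
    next
      case 2
      have "z j = 0" unfolding z_def using 2 by simp
      thus ?thesis using RP 2 by simp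
    next
      case 3
      have "nb n z j = 0" unfolding nb_def z_def using 3 by auto
      moreover have "z j = 0" unfolding z_def using 3 by simp
      ultimately show ?thesis using Rel_00 by simp
    qed
  qed
  have z0: "z 0 \<noteq> 0" unfolding z_def using i0 y0 by simp
  have zn: "z (n - 1) = 0" unfolding z_def using i n by simp
  have nn: "0 < n" using n k by simp
  from C_sc[where n=n and M=M and r=r, OF R nn sc zE z0]
  show False using zE z0 zn by auto
qed

lemma wd_from:
  assumes n: "n = 2 * k" and k: "1 \<le> k" and R: "\<And>i. i < n \<Longrightarrow> r i < dim_row (M i)"
    and MC: "\<And>i. i < n \<Longrightarrow> M i \<in> carrier_mat (dim_row (M i)) (dim_row (M i))"
    and S: "\<And>i. i < n \<Longrightarrow> symm (M i) (dim_row (M i))"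
    and A: "\<And>i. i < n \<Longrightarrow> alpha (M i) (r i) = alpha (M (n - 1 - i)) (r (n - 1 - i))"
    and sc: "strongly_cospectral (DPL n M r 0) (pathv M r 0) (pathv M r (n - 1))"
    and Y: "EIG M r \<theta> n 0 y \<or> EIG M r \<theta> k s y" and y0: "y 0 \<noteq> 0"
  shows "path_well_defined n M r \<theta>"
  unfolding path_well_defined_def
proof (intro allI impI notI)
  fix i0 assume i0: "i0 < n" and p: "rf_pole (alpha (M i0) (r i0)) \<theta>"
  show False
  proof (cases "i0 < k")
    case True
    show False by (rule pole_trunc[OF n k R MC S sc True p Y y0])
  next
    case False
    have i: "n - 1 - i0 < k" using False i0 n by auto
    have p': "rf_pole (alpha (M (n - 1 - i0)) (r (n - 1 - i0))) \<theta>" using p A[OF i0] by simp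
    show False by (rule pole_trunc[OF n k R MC S sc i p' Y y0])
  qed
qed

theorem lemma10:
  fixes k n :: nat and M :: "nat \<Rightarrow> real mat" and r :: "nat \<Rightarrow> nat"
    and s \<theta> :: real
  assumes "k \<ge> 1" and "n = 2 * k"
    and "\<And>i. i < n \<Longrightarrow> M i \<in> carrier_mat (dim_row (M i)) (dim_row (M i))"
    and "\<And>i. i < n \<Longrightarrow> transpose_mat (M i) = M i"
    and "\<And>i. i < n \<Longrightarrow> r i < dim_row (M i)"
    and "\<And>i. i < n \<Longrightarrow> alpha (M i) (r i) = alpha (M (n - 1 - i)) (r (n - 1 - i))"
    and "strongly_cospectral (decorated_path n M r) (pathv M r 0) (pathv M r (n - 1))"
    and "s \<in> {1, -1}"
  shows "(\<theta> \<in> Phi (decorated_path n M r) s (pathv M r 0) (pathv M r (n - 1))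
          \<longleftrightarrow> path_well_defined n M r \<theta> \<and> \<theta> \<in> Phi (path_at n M r \<theta>) s 0 (n - 1))
       \<and> (path_well_defined n M r \<theta> \<and> \<theta> \<in> Phi (path_at n M r \<theta>) s 0 (n - 1)
          \<longleftrightarrow> path_well_defined n M r \<theta> \<and> \<theta> \<in> eig_support (path_loop_at k M r s \<theta>) 0)
       \<and> (path_well_defined n M r \<theta> \<and> \<theta> \<in> eig_support (path_loop_at k M r s \<theta>) 0
          \<longleftrightarrow> \<theta> \<in> eig_support (decorated_path_loop k M r s) (pathv M r 0))"
proof -
  note k = assms(1) and n = assms(2) and MC = assms(3) and T = assms(4) and R = assms(5)
    and A = assms(6) and sc0 = assms(7) and sS = assms(8)
  have S: "symm (M i) (dim_row (M i))" if i: "i < n" for i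
    unfolding symm_def
  proof (intro allI impI)
    fix j l assume j: "j < dim_row (M i)" and l: "l < dim_row (M i)"
    have dc: "dim_col (M i) = dim_row (M i)" by (rule carrier_matD(2)[OF MC[OF i]])
    have "transpose_mat (M i) $$ (j,l) = M i $$ (l,j)"
      using j l dc by (intro index_transpose_mat(1)) auto
    thus "M i $$ (j,l) = M i $$ (l,j)" by (simp only: T[OF i])
  qed
  define a where "a = (\<lambda>i. rf_val (alpha (M i) (r i)) \<theta>)"
  have kn: "k < n" and n0: "0 < n" and k0: "0 < k" using n k by auto
  have ss: "s * s = 1" using sS by auto
  have symA: "a j = a (n - 1 - j)" if "j < n" for j unfolding a_def using A[OF that] by simp
  have sc: "strongly_cospectral (DPL n M r 0) (pathv M r 0) (pathv M r (n - 1))" using sc0 DPL_0 by metis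
  have wdRel: "Rel (M i) (dim_row (M i)) (r i) \<theta> t c \<longleftrightarrow> c = a i * t"
    if wd: "path_well_defined n M r \<theta>" and i: "i < n" for i t c
    using Rel_char[OF MC[OF i] S[OF i] R[OF i], of \<theta> t c] wd i unfolding path_well_defined_def a_def by blast
  have EIG_PE: "EIG M r \<theta> n 0 y \<longleftrightarrow> PE n a y" if wd: "path_well_defined n M r \<theta>" for y
    unfolding EIG_def PE_def using wdRel[OF wd] by auto
  have EIG_PL: "EIG M r \<theta> k s y \<longleftrightarrow> PL k a s y" if wd: "path_well_defined n M r \<theta>" for y
    unfolding EIG_def PL_def using wdRel[OF wd] kn by (auto simp: algebra_simps)
  have WE_PE: "WE n (\<lambda>i. \<theta> - a i) \<theta> y \<longleftrightarrow> PE n a y" for y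
    unfolding WE_def PE_def by (auto simp: algebra_simps)
  have WE_PL: "WE k (\<lambda>i. \<theta> - a i + (if i = k - 1 then s else 0)) \<theta> y \<longleftrightarrow> PL k a s y" for y
    unfolding WE_def PL_def by (auto simp: algebra_simps)
  have pa: "path_at n M r \<theta> = wpath n (\<lambda>i. \<theta> - a i)" unfolding path_at_def a_def ..
  have pla: "path_loop_at k M r s \<theta> = wpath k (\<lambda>i. \<theta> - a i + (if i = k - 1 then s else 0))"
    unfolding path_loop_at_def a_def ..
  have Rk: "r i < dim_row (M i)" if "i < k" for i using R that kn by simp
  have I: "\<theta> \<in> Phi (decorated_path n M r) s (pathv M r 0) (pathv M r (n - 1)) \<longleftrightarrow>
     (\<exists>y. EIG M r \<theta> n 0 y \<and> y 0 \<noteq> 0) \<and> (\<forall>y. EIG M r \<theta> n 0 y \<longrightarrow> y 0 = s * y (n - 1))"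
    unfolding DPL_0 by (rule C_Phi[where n=n and M=M and r=r, OF R n0])
  have II: "\<theta> \<in> Phi (path_at n M r \<theta>) s 0 (n - 1) \<longleftrightarrow>
     (\<exists>y. PE n a y \<and> y 0 \<noteq> 0) \<and> (\<forall>y. PE n a y \<longrightarrow> y 0 = s * y (n - 1))"
    unfolding pa W_Phi[OF n0] WE_PE ..
  have III: "\<theta> \<in> eig_support (path_loop_at k M r s \<theta>) 0 \<longleftrightarrow> (\<exists>x. PL k a s x \<and> x 0 \<noteq> 0)"
    unfolding pla W_supp[OF k0] WE_PL ..
  have IV: "\<theta> \<in> eig_support (decorated_path_loop k M r s) (pathv M r 0) \<longleftrightarrow> (\<exists>y. EIG M r \<theta> k s y \<and> y 0 \<noteq> 0)"
    unfolding DPL_loop by (rule C_supp[where n=k and M=M and r=r, OF Rk k0])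
  have F: "((\<exists>y. PE n a y \<and> y 0 \<noteq> 0) \<and> (\<forall>y. PE n a y \<longrightarrow> y 0 = s * y (n - 1))) \<longleftrightarrow> (\<exists>x. PL k a s x \<and> x 0 \<noteq> 0)"
    by (rule fold_equiv[where a=a, OF n k ss symA])
  have wdf: "path_well_defined n M r \<theta>" if "EIG M r \<theta> n 0 y \<or> EIG M r \<theta> k s y" "y 0 \<noteq> 0" for y
    by (rule wd_from[OF n k R MC S A sc that])
  show ?thesis
  proof (intro conjI)
    show "\<theta> \<in> Phi (decorated_path n M r) s (pathv M r 0) (pathv M r (n - 1))
          \<longleftrightarrow> path_well_defined n M r \<theta> \<and> \<theta> \<in> Phi (path_at n M r \<theta>) s 0 (n - 1)"
    proof
      assume H: "\<theta> \<in> Phi (decorated_path n M r) s (pathv M r 0) (pathv M r (n - 1))"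
      then obtain y where "EIG M r \<theta> n 0 y" "y 0 \<noteq> 0" using I by blast
      hence wd: "path_well_defined n M r \<theta>" using wdf by blast
      show "path_well_defined n M r \<theta> \<and> \<theta> \<in> Phi (path_at n M r \<theta>) s 0 (n - 1)"
        using H wd unfolding I II EIG_PE[OF wd] by blast
    next
      assume H: "path_well_defined n M r \<theta> \<and> \<theta> \<in> Phi (path_at n M r \<theta>) s 0 (n - 1)"
      hence wd: "path_well_defined n M r \<theta>" by blast
      show "\<theta> \<in> Phi (decorated_path n M r) s (pathv M r 0) (pathv M r (n - 1))"
        using H unfolding I II EIG_PE[OF wd] by blast
    qed
    show "path_well_defined n M r \<theta> \<and> \<theta> \<in> Phi (path_at n M r \<theta>) s 0 (n - 1)
          \<longleftrightarrow> path_well_defined n M r \<theta> \<and> \<theta> \<in> eig_support (path_loop_at k M r s \<theta>) 0"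
      unfolding II III F ..
    show "path_well_defined n M r \<theta> \<and> \<theta> \<in> eig_support (path_loop_at k M r s \<theta>) 0
          \<longleftrightarrow> \<theta> \<in> eig_support (decorated_path_loop k M r s) (pathv M r 0)"
    proof
      assume H: "path_well_defined n M r \<theta> \<and> \<theta> \<in> eig_support (path_loop_at k M r s \<theta>) 0"
      hence wd: "path_well_defined n M r \<theta>" by blast
      show "\<theta> \<in> eig_support (decorated_path_loop k M r s) (pathv M r 0)"
        using H unfolding III IV EIG_PL[OF wd] by blast
    next
      assume H: "\<theta> \<in> eig_support (decorated_path_loop k M r s) (pathv M r 0)"
      then obtain y where "EIG M r \<theta> k s y" "y 0 \<noteq> 0" using IV by blast
      hence wd: "path_well_defined n M r \<theta>" using wdf by blast
      show "path_well_defined n M r \<theta> \<and> \<theta> \<in> eig_support (path_loop_at k M r s \<theta>) 0"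
        using H wd unfolding III IV EIG_PL[OF wd] by blast
    qed
  qed
qed

end
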